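(* Let $M$ be a finite rectangular monoid, $k$ a field which is a splitting field for the maximal subgroups of $M$, $X\in\Lambda(M)$, and $A$ a $k[G_X\times G_X^{op}]$-module regarded as an $M$-bimodule via $m\cdot a\cdot m'=\rho_X(m)a\rho_X(m')$. Then $H^1(M,A)\cong H^1(G_X,A)\oplus\mathrm{Hom}_{k[G_X\times G_X^{op}]}(V_{X,X},A)$. In particular, if the characteristic of $k$ does not divide $|G_X|$, then $H^1(M,A)\cong\mathrm{Hom}_{k[G_X\times G_X^{op}]}(V_{X,X},A)$.
   Context: $E(M)$ idempotents, $m^\omega$ idempotent power. $M$ rectangular: each $\{f\in E(M):MfM=MeM\}$ closed under multiplication. $\Lambda(M)$: ideals $MeM$, $e\in E(M)$; $\sigma(m)=Mm^\omega M$; $\sigma(m)\ge X$ means $X\subseteq\sigma(m)$; $\nabla X=\{m:X\not\subseteq MmM\}$. Fixed $e_X$ with $Me_XM=X$, $G_X$ the group of units of $e_XMe_X$, $\rho_X(m)=e_Xme_X$ if $\sigma(m)\ge X$ and $0$ otherwise. $I_X=e_XMe_X\setminus G_X$; $\sim$ is the least equivalence relation on $I_X$ such that $e_Xmne_X\sim e_Xme_Xne_X$ for all $m,n\in M$ with $\sigma(mn)\not\ge X$, and $z\sim z'$ for all $z,z'\in(\nabla X)(\nabla X)\cap I_X$. $V_{X,X}=kI_X/W_X$ where $W_X$ is spanned by $(\nabla X)(\nabla X)\cap I_X$ and all differences $m-n$ with $m\sim n$; it is a $G_X\times G_X^{op}$-module via left and right multiplication. $H^1(M,A)$ (resp. $H^1(G_X,A)$):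 derivations $d$ with $d(mn)=md(n)+d(m)n$ modulo inner derivations $m\mapsto ma-am$. *)

theory Defs
  imports Main "Jordan_Normal_Form.Matrix"
begin

definition idem :: "'m::monoid_mult \<Rightarrow> bool" where
  "idem e \<longleftrightarrow> e * e = e"

definition omega :: "'m::monoid_mult \<Rightarrow> 'm" where
  "omega m = (THE e. idem e \<and> (\<exists>n\<ge>1. m ^ n = e))"

definition ideal :: "'m::monoid_mult \<Rightarrow> 'm set" where
  "ideal m = {x * m * y | x y. True}"

definition sigma :: "'m::monoid_mult \<Rightarrow> 'm set" where
  "sigma m = ideal (omega m)"

definition Lambda :: "'m::monoid_mult itself \<Rightarrow> 'm set set" where
  "Lambda _ = {ideal e | e. idem e}"

definition rectangular :: "'m::monoid_mult itself \<Rightarrow> bool" where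
  "rectangular _ \<longleftrightarrow> (\<forall>e f g :: 'm. idem e \<and> idem f \<and> idem g \<and> ideal f = ideal e \<and> ideal g = ideal e
      \<longrightarrow> idem (f * g) \<and> ideal (f * g) = ideal e)"

definition nabla :: "'m::monoid_mult set \<Rightarrow> 'm set" where
  "nabla X = {m. \<not> X \<subseteq> ideal m}"

definition corner :: "'m::monoid_mult \<Rightarrow> 'm set" where
  "corner e = {e * m * e | m. True}"

definition units_at :: "'m::monoid_mult \<Rightarrow> 'm set" where
  "units_at e = {g \<in> corner e. \<exists>h \<in> corner e. g * h = e \<and> h * g = e}"

definition ginv :: "'m::monoid_mult \<Rightarrow> 'm \<Rightarrow> 'm" where
  "ginv e g = (THE h. h \<in> units_at e \<and> g * h = e \<and> h * g = e)"

definition irreducible_rep :: "nat \<Rightarrow> ('g \<Rightarrow> 'k::field mat) \<Rightarrow> 'g set \<Rightarrow> bool" where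
  "irreducible_rep n \<rho> G \<longleftrightarrow>
     (\<forall>W. W \<subseteq> carrier_vec n \<and> 0\<^sub>v n \<in> W \<and> (\<forall>u\<in>W. \<forall>v\<in>W. u + v \<in> W)
        \<and> (\<forall>c. \<forall>u\<in>W. c \<cdot>\<^sub>v u \<in> W) \<and> (\<forall>g\<in>G. \<forall>u\<in>W. \<rho> g *\<^sub>v u \<in> W)
        \<longrightarrow> W = {0\<^sub>v n} \<or> W = carrier_vec n)"

text \<open>k is a splitting field for the finite group G (with identity unit_e):
  every simple kG-module S has End_kG(S) = k.  Simple kG-modules are
  finite-dimensional, so they are realised as irreducible representations on k^n.\<close>
definition splitting_field :: "'k::field itself \<Rightarrow> 'm::monoid_mult set \<Rightarrow> 'm \<Rightarrow> bool" where
  "splitting_field _ G unit_e \<longleftrightarrow>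
     (\<forall>n (\<rho> :: 'm \<Rightarrow> 'k mat). n > 0 \<and> (\<forall>g\<in>G. \<rho> g \<in> carrier_mat n n)
        \<and> (\<forall>g\<in>G. \<forall>h\<in>G. \<rho> (g * h) = \<rho> g * \<rho> h) \<and> \<rho> unit_e = 1\<^sub>m n
        \<and> irreducible_rep n \<rho> G
        \<longrightarrow> (\<forall>T \<in> carrier_mat n n. (\<forall>g\<in>G. T * \<rho> g = \<rho> g * T) \<longrightarrow> (\<exists>c. T = c \<cdot>\<^sub>m 1\<^sub>m n)))"

definition splits_max_subgroups :: "'k::field itself \<Rightarrow> 'm::monoid_mult itself \<Rightarrow> bool" where
  "splits_max_subgroups K _ \<longleftrightarrow> (\<forall>e :: 'm. idem e \<longrightarrow> splitting_field K (units_at e) e)"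

type_synonym ('k, 'b) space = "'b set \<times> ('b \<Rightarrow> 'b \<Rightarrow> 'b) \<times> ('k \<Rightarrow> 'b \<Rightarrow> 'b)"

definition lin_iso :: "('k, 'b) space \<Rightarrow> ('k, 'c) space \<Rightarrow> bool" where
  "lin_iso S T \<longleftrightarrow> (case S of (C1, a1, s1) \<Rightarrow> case T of (C2, a2, s2) \<Rightarrow>
     (\<exists>\<Phi>. bij_betw \<Phi> C1 C2 \<and> (\<forall>x\<in>C1. \<forall>y\<in>C1. \<Phi> (a1 x y) = a2 (\<Phi> x) (\<Phi> y))
        \<and> (\<forall>c. \<forall>x\<in>C1. \<Phi> (s1 c x) = s2 c (\<Phi> x))))"

definition prod_space :: "('k, 'b) space \<Rightarrow> ('k, 'c) space \<Rightarrow> ('k, 'b \<times> 'c) space" where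
  "prod_space S T = (case S of (C1, a1, s1) \<Rightarrow> case T of (C2, a2, s2) \<Rightarrow>
     (C1 \<times> C2, \<lambda>x y. (a1 (fst x) (fst y), a2 (snd x) (snd y)), \<lambda>c x. (s1 c (fst x), s2 c (snd x))))"

definition coset :: "('b \<Rightarrow> 'b \<Rightarrow> 'b) \<Rightarrow> 'b set \<Rightarrow> 'b \<Rightarrow> 'b set" where
  "coset a I d = (\<lambda>i. a d i) ` I"

definition quot_space :: "('k, 'b) space \<Rightarrow> 'b set \<Rightarrow> ('k, 'b set) space" where
  "quot_space S I = (case S of (D, a, s) \<Rightarrow>
     (coset a I ` D,
      \<lambda>x y. {a u v | u v. u \<in> x \<and> v \<in> y},
      \<lambda>c x. {a (s c u) i | u i. u \<in> x \<and> i \<in> I}))"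

definition fadd :: "('x \<Rightarrow> 'a::plus) \<Rightarrow> ('x \<Rightarrow> 'a) \<Rightarrow> 'x \<Rightarrow> 'a" where
  "fadd f g = (\<lambda>x. f x + g x)"

definition fscale :: "('k \<Rightarrow> 'a \<Rightarrow> 'a) \<Rightarrow> 'k \<Rightarrow> ('x \<Rightarrow> 'a) \<Rightarrow> 'x \<Rightarrow> 'a" where
  "fscale sc c f = (\<lambda>x. sc c (f x))"

definition GGop_module :: "('k::field \<Rightarrow> 'a::ab_group_add \<Rightarrow> 'a) \<Rightarrow> ('m::monoid_mult \<Rightarrow> 'a \<Rightarrow> 'a)
     \<Rightarrow> ('a \<Rightarrow> 'm \<Rightarrow> 'a) \<Rightarrow> 'm set \<Rightarrow> 'm \<Rightarrow> bool" where
  "GGop_module scale lact ract G unit_e \<longleftrightarrow>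
     vector_space scale
     \<and> (\<forall>g\<in>G. \<forall>a b. lact g (a + b) = lact g a + lact g b \<and> ract (a + b) g = ract a g + ract b g)
     \<and> (\<forall>g\<in>G. \<forall>c a. lact g (scale c a) = scale c (lact g a) \<and> ract (scale c a) g = scale c (ract a g))
     \<and> (\<forall>a. lact unit_e a = a \<and> ract a unit_e = a)
     \<and> (\<forall>g\<in>G. \<forall>h\<in>G. \<forall>a. lact g (lact h a) = lact (g * h) a \<and> ract (ract a g) h = ract a (g * h))
     \<and> (\<forall>g\<in>G. \<forall>h\<in>G. \<forall>a. lact g (ract a h) = ract (lact g a) h)"

definition rho_left :: "'m::monoid_mult set \<Rightarrow> 'm \<Rightarrow> ('m \<Rightarrow> 'a::zero \<Rightarrow> 'a) \<Rightarrow> 'm \<Rightarrow> 'a \<Rightarrow> 'a" where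
  "rho_left X eX lact m a = (if X \<subseteq> sigma m then lact (eX * m * eX) a else 0)"

definition rho_right :: "'m::monoid_mult set \<Rightarrow> 'm \<Rightarrow> ('a::zero \<Rightarrow> 'm \<Rightarrow> 'a) \<Rightarrow> 'a \<Rightarrow> 'm \<Rightarrow> 'a" where
  "rho_right X eX ract a m = (if X \<subseteq> sigma m then ract a (eX * m * eX) else 0)"

definition Der_M :: "'m::monoid_mult set \<Rightarrow> 'm \<Rightarrow> ('m \<Rightarrow> 'a::ab_group_add \<Rightarrow> 'a) \<Rightarrow> ('a \<Rightarrow> 'm \<Rightarrow> 'a) \<Rightarrow> ('m \<Rightarrow> 'a) set" where
  "Der_M X eX lact ract = {d. \<forall>m n. d (m * n) = rho_left X eX lact m (d n) + rho_right X eX ract (d m) n}"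

definition Inn_M :: "'m::monoid_mult set \<Rightarrow> 'm \<Rightarrow> ('m \<Rightarrow> 'a::ab_group_add \<Rightarrow> 'a) \<Rightarrow> ('a \<Rightarrow> 'm \<Rightarrow> 'a) \<Rightarrow> ('m \<Rightarrow> 'a) set" where
  "Inn_M X eX lact ract = {(\<lambda>m. rho_left X eX lact m a - rho_right X eX ract a m) | a. True}"

definition H1_M :: "('k::field \<Rightarrow> 'a::ab_group_add \<Rightarrow> 'a) \<Rightarrow> 'm::monoid_mult set \<Rightarrow> 'm
     \<Rightarrow> ('m \<Rightarrow> 'a \<Rightarrow> 'a) \<Rightarrow> ('a \<Rightarrow> 'm \<Rightarrow> 'a) \<Rightarrow> ('k, ('m \<Rightarrow> 'a) set) space" where
  "H1_M scale X eX lact ract =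
     quot_space (Der_M X eX lact ract, fadd, fscale scale) (Inn_M X eX lact ract)"

definition Der_G :: "'m::monoid_mult set \<Rightarrow> ('m \<Rightarrow> 'a::ab_group_add \<Rightarrow> 'a) \<Rightarrow> ('a \<Rightarrow> 'm \<Rightarrow> 'a) \<Rightarrow> ('m \<Rightarrow> 'a) set" where
  "Der_G G lact ract = {d. (\<forall>g. g \<notin> G \<longrightarrow> d g = 0) \<and>
       (\<forall>g\<in>G. \<forall>h\<in>G. d (g * h) = lact g (d h) + ract (d g) h)}"

definition Inn_G :: "'m::monoid_mult set \<Rightarrow> ('m \<Rightarrow> 'a::ab_group_add \<Rightarrow> 'a) \<Rightarrow> ('a \<Rightarrow> 'm \<Rightarrow> 'a) \<Rightarrow> ('m \<Rightarrow> 'a) set" where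
  "Inn_G G lact ract = {(\<lambda>g. if g \<in> G then lact g a - ract a g else 0) | a. True}"

definition H1_G :: "('k::field \<Rightarrow> 'a::ab_group_add \<Rightarrow> 'a) \<Rightarrow> 'm::monoid_mult set
     \<Rightarrow> ('m \<Rightarrow> 'a \<Rightarrow> 'a) \<Rightarrow> ('a \<Rightarrow> 'm \<Rightarrow> 'a) \<Rightarrow> ('k, ('m \<Rightarrow> 'a) set) space" where
  "H1_G scale G lact ract = quot_space (Der_G G lact ract, fadd, fscale scale) (Inn_G G lact ract)"

definition I_X :: "'m::monoid_mult \<Rightarrow> 'm set" where
  "I_X eX = corner eX - units_at eX"

definition Zset :: "'m::monoid_mult set \<Rightarrow> 'm \<Rightarrow> 'm set" where
  "Zset X eX = {a * b | a b. a \<in> nabla X \<and> b \<in> nabla X} \<inter> I_X eX"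

definition gen_rel :: "'m::monoid_mult set \<Rightarrow> 'm \<Rightarrow> ('m \<times> 'm) set" where
  "gen_rel X eX = ({(eX * m * n * eX, eX * m * eX * n * eX) | m n. \<not> X \<subseteq> sigma (m * n)}
                   \<union> Zset X eX \<times> Zset X eX) \<inter> (I_X eX \<times> I_X eX)"

definition simX :: "'m::monoid_mult set \<Rightarrow> 'm \<Rightarrow> ('m \<times> 'm) set" where
  "simX X eX = Id_on (I_X eX) \<union> (gen_rel X eX \<union> (gen_rel X eX)\<inverse>)\<^sup>+"

definition kI :: "'m::monoid_mult \<Rightarrow> ('m \<Rightarrow> 'k::field) set" where
  "kI eX = {v. \<forall>y. y \<notin> I_X eX \<longrightarrow> v y = 0}"

definition delta :: "'m \<Rightarrow> 'm \<Rightarrow> 'k::field" where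
  "delta x = (\<lambda>y. if y = x then 1 else 0)"

definition W_gens :: "'m::monoid_mult set \<Rightarrow> 'm \<Rightarrow> ('m \<Rightarrow> 'k::field) set" where
  "W_gens X eX = {delta z | z. z \<in> Zset X eX} \<union>
                 {(\<lambda>y. delta a y - delta b y) | a b. (a, b) \<in> simX X eX}"

definition W_X :: "'m::monoid_mult set \<Rightarrow> 'm \<Rightarrow> ('m \<Rightarrow> 'k::field) set" where
  "W_X X eX = {(\<lambda>y. \<Sum>w\<in>t. r w * w y) | t r. finite t \<and> t \<subseteq> W_gens X eX}"

text \<open>G x G^op action on k I_X induced by x |-> g x h on the basis.\<close>
definition gact :: "'m::monoid_mult \<Rightarrow> 'm \<Rightarrow> 'm \<Rightarrow> ('m \<Rightarrow> 'k::field) \<Rightarrow> 'm \<Rightarrow> 'k" where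
  "gact eX g h v = (\<lambda>y. if y \<in> I_X eX then v (ginv eX g * y * ginv eX h) else 0)"

text \<open>Hom_{k[G x G^op]}(V_{X,X}, A), realised as k[G x G^op]-linear maps
  k I_X -> A vanishing on W_X (extended by 0 outside k I_X).\<close>
definition HomV :: "('k::field \<Rightarrow> 'a::ab_group_add \<Rightarrow> 'a) \<Rightarrow> 'm::monoid_mult set \<Rightarrow> 'm
     \<Rightarrow> ('m \<Rightarrow> 'a \<Rightarrow> 'a) \<Rightarrow> ('a \<Rightarrow> 'm \<Rightarrow> 'a) \<Rightarrow> (('m \<Rightarrow> 'k) \<Rightarrow> 'a) set" where
  "HomV scale X eX lact ract = {\<phi>.
      (\<forall>v. v \<notin> kI eX \<longrightarrow> \<phi> v = 0)
    \<and> (\<forall>u\<in>kI eX. \<forall>v\<in>kI eX. \<phi> (\<lambda>y. u y + v y) = \<phi> u + \<phi> v)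
    \<and> (\<forall>c. \<forall>v\<in>kI eX. \<phi> (\<lambda>y. c * v y) = scale c (\<phi> v))
    \<and> (\<forall>w\<in>W_X X eX. \<phi> w = 0)
    \<and> (\<forall>g\<in>units_at eX. \<forall>h\<in>units_at eX. \<forall>v\<in>kI eX.
         \<phi> (gact eX g h v) = lact g (ract (\<phi> v) h))}"

definition HomV_space :: "('k::field \<Rightarrow> 'a::ab_group_add \<Rightarrow> 'a) \<Rightarrow> 'm::monoid_mult set \<Rightarrow> 'm
     \<Rightarrow> ('m \<Rightarrow> 'a \<Rightarrow> 'a) \<Rightarrow> ('a \<Rightarrow> 'm \<Rightarrow> 'a) \<Rightarrow> ('k, ('m \<Rightarrow> 'k) \<Rightarrow> 'a) space" where
  "HomV_space scale X eX lact ract = (HomV scale X eX lact ract, fadd, fscale scale)"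

end

theory Submission
  imports Defs
begin

lemma idem_pow: "idem (x::'m::monoid_mult) \<Longrightarrow> k \<ge> 1 \<Longrightarrow> x ^ k = x"
proof (induction k)
  case 0 then show ?case by simp
next
  case (Suc k)
  then show ?case
    by (cases "k = 0") (auto simp: idem_def power_Suc2)
qed

lemma pow_idem_exists:
  fixes m :: "'m::{monoid_mult,finite}"
  shows "\<exists>n\<ge>1. idem (m ^ n)"
proof -
  define f where "f = (\<lambda>i::nat. m ^ Suc i)"
  have "\<not> inj f"
  proof
    assume "inj f"
    then have "finite (UNIV::nat set)"
      using finite_imageD[of f "UNIV::nat set"] by (metis finite subset_UNIV inj_on_subset)
    then show False by simp
  qed
  then obtain x y where xy: "x \<noteq> y" "f x = f y" unfolding inj_def by blast
  have "\<exists>a b. 1 \<le> a \<and> a < b \<and> m ^ a = m ^ b"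
  proof (cases "x < y")
    case True then show ?thesis using xy unfolding f_def by (intro exI[of _ "Suc x"] exI[of _ "Suc y"]) simp
  next
    case False then have "y < x" using xy by simp
    then show ?thesis using xy unfolding f_def by (intro exI[of _ "Suc y"] exI[of _ "Suc x"]) simp
  qed
  then obtain a b where ab: "1 \<le> a" "a < b" "m ^ a = m ^ b" by blast
  define p where "p = b - a"
  have p1: "p \<ge> 1" using ab p_def by simp
  have step: "m ^ (a + k) = m ^ (a + k + p)" for k
  proof -
    have "m ^ (a + k) = m ^ a * m ^ k" by (simp add: power_add)
    also have "\<dots> = m ^ b * m ^ k" using ab by simp
    also have "\<dots> = m ^ (a + k + p)" using ab p_def by (simp add: power_add[symmetric] add.commute)
    finally show ?thesis .
  qed
  have iter: "m ^ (a + k) = m ^ (a + k + q * p)" for k q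
  proof (induction q)
    case 0 then show ?case by simp
  next
    case (Suc q)
    have ar: "a + k + Suc q * p = a + (k + q*p) + p" by simp
    have "m ^ (a + k + Suc q * p) = m ^ (a + (k + q*p) + p)" by (simp only: ar)
    also have "\<dots> = m ^ (a + (k + q*p))" by (rule step[symmetric])
    also have "\<dots> = m ^ (a + k + q*p)" by (simp only: add.assoc)
    also have "\<dots> = m ^ (a + k)" using Suc.IH by simp
    finally show ?case by simp
  qed
  define n where "n = a * p"
  have n1: "n \<ge> 1" using ab p1 n_def by simp
  have na: "n \<ge> a" using p1 n_def by simp
  have ar: "n + n = a + (n - a) + a * p" using na n_def by simp
  have "m ^ n * m ^ n = m ^ (n + n)" by (simp only: power_add)
  also have "\<dots> = m ^ (a + (n - a) + a * p)" by (simp only: ar)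
  also have "\<dots> = m ^ (a + (n - a))" using iter[of "n-a" a] by simp
  also have "\<dots> = m ^ n" using na by simp
  finally show ?thesis using n1 unfolding idem_def by blast
qed

lemma omega_props:
  fixes m :: "'m::{monoid_mult,finite}"
  shows "\<exists>n\<ge>1. omega m = m ^ n \<and> idem (omega m)"
proof -
  obtain n where n: "n \<ge> 1" "idem (m ^ n)" using pow_idem_exists[of m] by auto
  have uniq: "x = m ^ n" if ix: "idem x" and kx: "\<exists>k\<ge>1. m ^ k = x" for x
  proof -
    obtain k where k: "k \<ge> 1" "m ^ k = x" using kx by auto
    have "x = x ^ n" using idem_pow[OF ix n(1)] by simp
    also have "\<dots> = (m ^ k) ^ n" using k by simp
    also have "\<dots> = m ^ (k * n)" by (rule power_mult[symmetric])
    also have "\<dots> = m ^ (n * k)" by (simp only: mult.commute)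
    also have "\<dots> = (m ^ n) ^ k" by (rule power_mult)
    also have "\<dots> = m ^ n" using idem_pow[OF n(2) k(1)] .
    finally show ?thesis .
  qed
  have "(THE e. idem e \<and> (\<exists>n\<ge>1. m ^ n = e)) = m ^ n"
  proof (rule the_equality)
    show "idem (m ^ n) \<and> (\<exists>k\<ge>1. m ^ k = m ^ n)" using n by blast
  next
    fix x assume "idem x \<and> (\<exists>k\<ge>1. m ^ k = x)"
    then show "x = m ^ n" using uniq by blast
  qed
  then have "omega m = m ^ n" unfolding omega_def .
  then show ?thesis using n by auto
qed

lemma ideal_iff: "x \<in> ideal m \<longleftrightarrow> (\<exists>a b. x = a * m * b)"
  unfolding ideal_def by blast

lemma self_in_ideal: "m \<in> ideal (m::'m::monoid_mult)"
proof -
  have "m = 1 * m * 1" by simp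
  then show ?thesis unfolding ideal_iff by blast
qed

lemma ideal_sub_iff: "ideal e \<subseteq> ideal f \<longleftrightarrow> e \<in> ideal (f::'m::monoid_mult)"
proof
  assume "ideal e \<subseteq> ideal f" then show "e \<in> ideal f" using self_in_ideal by blast
next
  assume "e \<in> ideal f"
  then obtain x y where e: "e = x * f * y" unfolding ideal_iff by blast
  show "ideal e \<subseteq> ideal f"
  proof
    fix z assume "z \<in> ideal e"
    then obtain a b where "z = a * e * b" unfolding ideal_iff by blast
    then have "z = (a * x) * f * (y * b)" using e by (simp add: mult.assoc)
    then show "z \<in> ideal f" unfolding ideal_iff by blast
  qed
qed

lemma ideal_mono_l: "x \<in> ideal (a * m) \<Longrightarrow> x \<in> ideal (m::'m::monoid_mult)"
proof -
  assume "x \<in> ideal (a * m)"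
  then obtain p q where "x = p * (a * m) * q" unfolding ideal_iff by blast
  then have "x = (p * a) * m * q" by (simp add: mult.assoc)
  then show ?thesis unfolding ideal_iff by blast
qed

lemma ideal_mono_r: "x \<in> ideal (m * a) \<Longrightarrow> x \<in> ideal (m::'m::monoid_mult)"
proof -
  assume "x \<in> ideal (m * a)"
  then obtain p q where "x = p * (m * a) * q" unfolding ideal_iff by blast
  then have "x = p * m * (a * q)" by (simp add: mult.assoc)
  then show ?thesis unfolding ideal_iff by blast
qed

lemma idemD: "idem e \<Longrightarrow> e * e = e" unfolding idem_def by simp
lemma idemD2: "idem (e::'m::monoid_mult) \<Longrightarrow> e * (e * y) = e * y"
  unfolding idem_def by (simp add: mult.assoc[symmetric])

lemma corner_iff: assumes "idem e" shows "x \<in> corner e \<longleftrightarrow> e * x * e = x"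
proof
  assume "x \<in> corner e" then obtain m where "x = e*m*e" unfolding corner_def by blast
  then show "e*x*e = x" using assms by (simp add: mult.assoc idemD idemD2)
next
  assume "e*x*e = x" then have "x = e*x*e" by simp
  then show "x \<in> corner e" unfolding corner_def by blast
qed

lemma corner_l: "idem e \<Longrightarrow> x \<in> corner e \<Longrightarrow> e * x = x"
proof -
  assume e: "idem e" and x: "x \<in> corner e"
  then obtain m where "x = e*m*e" unfolding corner_def by blast
  then show ?thesis using e by (simp add: mult.assoc idemD2)
qed
lemma corner_r: "idem e \<Longrightarrow> x \<in> corner e \<Longrightarrow> x * e = x"
proof -
  assume e: "idem e" and x: "x \<in> corner e"
  then obtain m where "x = e*m*e" unfolding corner_def by blast
  then show ?thesis using e by (simp add: mult.assoc idemD)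
qed

lemma corner_eme: "e * m * e \<in> corner e"
  unfolding corner_def by blast

lemma corner_mult: "idem e \<Longrightarrow> x \<in> corner e \<Longrightarrow> y \<in> corner e \<Longrightarrow> x * y \<in> corner e"
proof -
  assume e: "idem e" and x: "x \<in> corner e" and y: "y \<in> corner e"
  have "e * (x * y) * e = (e * x) * (y * e)" by (simp add: mult.assoc)
  then have "x * y = e * (x * y) * e"
    using corner_l[OF e x] corner_r[OF e y] by simp
  then show ?thesis unfolding corner_def by blast
qed

lemma corner_pow: "idem e \<Longrightarrow> b \<in> corner e \<Longrightarrow> N \<ge> 1 \<Longrightarrow> b ^ N \<in> corner e"
proof (induction N)
  case 0 then show ?case by simp
next
  case (Suc k)
  show ?case
  proof (cases "k = 0")
    case True then show ?thesis using Suc by simp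
  next
    case False
    then have "b ^ k \<in> corner e" using Suc by simp
    then show ?thesis using corner_mult[OF Suc(2) Suc(3)] by simp
  qed
qed

lemma corner_inv:
  fixes a b :: "'m::{monoid_mult,finite}"
  assumes e: "idem e" and a: "a \<in> corner e" and b: "b \<in> corner e" and ab: "a * b = e"
  shows "b * a = e"
proof -
  obtain N where N: "N \<ge> 1" "idem (b ^ N)" using pow_idem_exists[of b] by auto
  have ae: "a * e = a" using corner_r[OF e a] .
  have be: "b * e = b" using corner_r[OF e b] .
  have pw: "a ^ k * e * b ^ k = e" for k
  proof (induction k)
    case 0 then show ?case by simp
  next
    case (Suc k)
    have h1: "a ^ Suc k = a ^ k * a" by (rule power_Suc2)
    have h2: "b ^ Suc k = b * b ^ k" by (rule power_Suc)
    have "a ^ Suc k * e * b ^ Suc k = a ^ k * (a * e) * (b * b ^ k)"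
      by (simp only: h1 h2 mult.assoc)
    also have "\<dots> = a ^ k * (a * b) * b ^ k" using ae by (simp only: mult.assoc)
    also have "\<dots> = a ^ k * e * b ^ k" using ab by simp
    finally show ?case using Suc by simp
  qed
  have bNc: "b ^ N \<in> corner e" using corner_pow[OF e b N(1)] .
  have "e = a ^ N * e * b ^ N" using pw by simp
  also have "\<dots> = a ^ N * e * (b ^ N * b ^ N)" using idemD[OF N(2)] by simp
  also have "\<dots> = (a ^ N * e * b ^ N) * b ^ N" by (simp only: mult.assoc)
  also have "\<dots> = e * b ^ N" using pw by simp
  also have "\<dots> = b ^ N" using corner_l[OF e bNc] .
  finally have bN: "b ^ N = e" by simp
  obtain M where M: "N = Suc M" using N(1) by (cases N) auto
  have bM: "b * b ^ M = e" using bN M by simp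
  have "b * a = b * (a * e)" using ae by simp
  also have "\<dots> = b * (a * (b * b ^ M))" using bM by simp
  also have "\<dots> = (b * e) * b ^ M" using ab by (simp only: mult.assoc[symmetric])
  also have "\<dots> = e" using be bM by simp
  finally show ?thesis .
qed

lemma units_at_iff: "g \<in> units_at e \<longleftrightarrow> g \<in> corner e \<and> (\<exists>h\<in>corner e. g * h = e \<and> h * g = e)"
  unfolding units_at_def by blast

lemma units_corner: "g \<in> units_at e \<Longrightarrow> g \<in> corner e"
  unfolding units_at_def by blast

lemma e_corner: "idem e \<Longrightarrow> e \<in> corner e"
  using corner_iff[of e e] by (simp add: idemD)

lemma e_unit: "idem e \<Longrightarrow> e \<in> units_at e"
  unfolding units_at_iff using e_corner idemD by blast

lemma stab:
  fixes x :: "'m::{monoid_mult,finite}"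
  assumes e: "idem e" and x: "x \<in> corner e" and ex: "e \<in> ideal x"
  shows "x \<in> units_at e"
proof -
  obtain p q where pq: "e = p * x * q" using ex unfolding ideal_iff by blast
  have xe: "e * x * e = x" using x corner_iff[OF e] by simp
  define a where "a = e * p * e"
  define b where "b = e * q * e"
  have ac: "a \<in> corner e" and bc: "b \<in> corner e" unfolding a_def b_def by (rule corner_eme)+
  have "e = e * e * e" using e by (simp add: idemD)
  also have "\<dots> = e * (p * x * q) * e" using pq by simp
  also have "\<dots> = e * p * (e * x * e) * q * e"
  proof -
    have "e * p * (e * x * e) * q * e = e * p * x * q * e" by (simp only: xe)
    then show ?thesis by (simp add: mult.assoc)
  qed
  also have "\<dots> = a * x * b" unfolding a_def b_def using e by (simp add: mult.assoc idemD idemD2)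
  finally have axb: "e = a * x * b" .
  have c1: "(x * b) * a = e"
    using corner_inv[OF e ac corner_mult[OF e x bc]] axb by (simp add: mult.assoc)
  have c2: "b * (a * x) = e"
    using corner_inv[OF e corner_mult[OF e ac x] bc] axb by (simp add: mult.assoc)
  have ba: "b * a \<in> corner e" using corner_mult[OF e bc ac] .
  have "x * (b * a) = e" using c1 by (simp add: mult.assoc)
  moreover have "(b * a) * x = e" using c2 by (simp add: mult.assoc)
  ultimately show ?thesis unfolding units_at_iff using x ba by blast
qed

lemma idem_J_eq:
  fixes x :: "'m::{monoid_mult,finite}"
  assumes e: "idem e" and x: "x \<in> corner e" and ix: "idem x" and ex: "e \<in> ideal x"
  shows "x = e"
proof -
  obtain h where h: "h \<in> corner e" "x * h = e" using stab[OF e x ex] unfolding units_at_iff by blast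
  have "e = x * x * h" using h idemD[OF ix] by simp
  also have "\<dots> = x * e" using h by (simp add: mult.assoc)
  also have "\<dots> = x" using corner_r[OF e x] .
  finally show ?thesis by simp
qed

lemma units_mult: "idem e \<Longrightarrow> g \<in> units_at e \<Longrightarrow> g' \<in> units_at e \<Longrightarrow> g * g' \<in> units_at e"
proof -
  assume e: "idem e" and g: "g \<in> units_at e" and g': "g' \<in> units_at e"
  obtain h where h: "h \<in> corner e" "g * h = e" "h * g = e" using g unfolding units_at_iff by blast
  obtain h' where h': "h' \<in> corner e" "g' * h' = e" "h' * g' = e" using g' unfolding units_at_iff by blast
  have gc: "g \<in> corner e" "g' \<in> corner e" using g g' units_corner by auto
  have "g * g' * (h' * h) = g * (g' * h') * h" by (simp add: mult.assoc)
  also have "\<dots> = g * e * h" using h' by simp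
  also have "\<dots> = e" using h corner_r[OF e gc(1)] by simp
  finally have 1: "g * g' * (h' * h) = e" .
  have "h' * h * (g * g') = h' * (h * g) * g'" by (simp add: mult.assoc)
  also have "\<dots> = h' * e * g'" using h by simp
  also have "\<dots> = e" using h' corner_r[OF e h'(1)] by simp
  finally have 2: "h' * h * (g * g') = e" .
  show ?thesis unfolding units_at_iff using 1 2 corner_mult[OF e gc] corner_mult[OF e h'(1) h(1)] by blast
qed

lemma ginv_props:
  assumes e: "idem e" and g: "g \<in> units_at e"
  shows "ginv e g \<in> units_at e \<and> g * ginv e g = e \<and> ginv e g * g = e"
proof -
  obtain h where h: "h \<in> corner e" "g * h = e" "h * g = e" using g unfolding units_at_iff by blast
  have hu: "h \<in> units_at e" using h units_corner[OF g] unfolding units_at_iff by blast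
  have "ginv e g = h"
    unfolding ginv_def
  proof (rule the_equality)
    show "h \<in> units_at e \<and> g * h = e \<and> h * g = e" using hu h by blast
  next
    fix h' assume h': "h' \<in> units_at e \<and> g * h' = e \<and> h' * g = e"
    have "h' = h' * e" using corner_r[OF e units_corner] h' by simp
    also have "\<dots> = (h' * g) * h" using h by (simp add: mult.assoc)
    also have "\<dots> = h" using h' corner_l[OF e h(1)] by simp
    finally show "h' = h" .
  qed
  then show ?thesis using hu h by simp
qed

lemma rectD:
  assumes r: "rectangular TYPE('m::monoid_mult)" and f: "idem (f::'m)" and g: "idem g"
    and fg: "ideal f = ideal g"
  shows "idem (f * g) \<and> ideal (f * g) = ideal f"
  using r f g fg unfolding rectangular_def by (metis (no_types))

lemma ideal_eqI: "a \<in> ideal b \<Longrightarrow> b \<in> ideal a \<Longrightarrow> ideal a = ideal (b::'m::monoid_mult)"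
  using ideal_sub_iff by blast

lemma Rk:
  fixes e :: "'m::monoid_mult"
  assumes e: "idem e" and aw: "e = a * w" and ea: "a = e * a"
  shows "idem (w * a) \<and> ideal (w * a) = ideal e \<and> a * (w * a) = a"
proof -
  have "(w * a) * (w * a) = w * (a * w) * a" by (simp add: mult.assoc)
  also have "\<dots> = w * (e * a)" using aw by (simp add: mult.assoc)
  also have "\<dots> = w * a" using ea by simp
  finally have i: "idem (w * a)" unfolding idem_def .
  have "w * a = w * e * a" using ea by (simp add: mult.assoc)
  then have 1: "w * a \<in> ideal e" unfolding ideal_iff by blast
  have "e = (a * w) * (a * w)" using aw idemD[OF e] by simp
  also have "\<dots> = a * (w * a) * w" by (simp add: mult.assoc)
  finally have 2: "e \<in> ideal (w * a)" unfolding ideal_iff by blast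
  have "a * (w * a) = (a * w) * a" by (simp add: mult.assoc)
  also have "\<dots> = a" using aw ea by simp
  finally show ?thesis using i ideal_eqI[OF 1 2] by blast
qed

lemma Lk:
  fixes e :: "'m::monoid_mult"
  assumes e: "idem e" and wb: "e = w * b" and be: "b = b * e"
  shows "idem (b * w) \<and> ideal (b * w) = ideal e \<and> (b * w) * b = b"
proof -
  have "(b * w) * (b * w) = b * (w * b) * w" by (simp add: mult.assoc)
  also have "\<dots> = (b * e) * w" using wb by (simp add: mult.assoc)
  also have "\<dots> = b * w" using be by simp
  finally have i: "idem (b * w)" unfolding idem_def .
  have "b * w = b * e * w" using be by simp
  then have 1: "b * w \<in> ideal e" unfolding ideal_iff by blast
  have "e = (w * b) * (w * b)" using wb idemD[OF e] by simp
  also have "\<dots> = w * (b * w) * b" by (simp add: mult.assoc)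
  finally have 2: "e \<in> ideal (b * w)" unfolding ideal_iff by blast
  have "(b * w) * b = b * (w * b)" by (simp add: mult.assoc)
  also have "\<dots> = b" using wb be by simp
  finally show ?thesis using i ideal_eqI[OF 1 2] by blast
qed

lemma R_unit:
  fixes e :: "'m::{monoid_mult,finite}"
  assumes r: "rectangular TYPE('m)" and e: "idem e" and aw: "e = a * w" and ea: "a = e * a"
  shows "a * e \<in> units_at e"
proof -
  have k: "idem (w * a)" "ideal (w * a) = ideal e" using Rk[OF e aw ea] by auto
  have "ideal ((w * a) * e) = ideal (w * a)" using rectD[OF r k(1) e k(2)] by blast
  then have "e \<in> ideal (w * (a * e))" using k(2) self_in_ideal[of e] by (simp add: mult.assoc)
  then have 1: "e \<in> ideal (a * e)" by (rule ideal_mono_l)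
  have "a * e = e * a * e" using ea by simp
  then have "a * e \<in> corner e" using corner_eme by metis
  then show ?thesis using stab[OF e _ 1] by blast
qed

lemma L_unit:
  fixes e :: "'m::{monoid_mult,finite}"
  assumes r: "rectangular TYPE('m)" and e: "idem e" and wb: "e = w * b" and be: "b = b * e"
  shows "e * b \<in> units_at e"
proof -
  have k: "idem (b * w)" "ideal (b * w) = ideal e" using Lk[OF e wb be] by auto
  have "ideal (e * (b * w)) = ideal e" using rectD[OF r e k(1) k(2)[symmetric]] by blast
  then have "e \<in> ideal ((e * b) * w)" using self_in_ideal[of e] by (simp add: mult.assoc)
  then have 1: "e \<in> ideal (e * b)" by (rule ideal_mono_r)
  have "e * b = e * b * e" using be by (simp add: mult.assoc)
  then have "e * b \<in> corner e" using corner_eme by metis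
  then show ?thesis using stab[OF e _ 1] by blast
qed

lemma band_xwx:
  fixes x :: "'m::{monoid_mult,finite}"
  assumes r: "rectangular TYPE('m)" and x: "idem x" and w: "idem w" and wx: "ideal w = ideal x"
  shows "x * w * x = x"
proof -
  have 1: "idem (x * w)" "ideal (x * w) = ideal x" using rectD[OF r x w wx[symmetric]] by auto
  have 2: "idem (x * w * x)" "ideal (x * w * x) = ideal (x * w)" using rectD[OF r 1(1) x 1(2)] by auto
  have "x \<in> ideal (x * w * x)" using 2(2) 1(2) self_in_ideal[of x] by simp
  then show ?thesis using idem_J_eq[OF x corner_eme 2(1)] by blast
qed

lemma band_xyz:
  fixes x :: "'m::{monoid_mult,finite}"
  assumes r: "rectangular TYPE('m)" and x: "idem x" and y: "idem y" and z: "idem z"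
    and yx: "ideal y = ideal x" and zx: "ideal z = ideal x"
  shows "x * y * z = x * z"
proof -
  have yz: "idem (y * z)" "ideal (y * z) = ideal x"
    using rectD[OF r y z] yx zx by auto
  have xzx: "x * z * x = x" using band_xwx[OF r x z zx] .
  have zxz: "z * x * z = z" using band_xwx[OF r z x zx[symmetric]] .
  have xyzx: "x * (y * z) * x = x" using band_xwx[OF r x yz] .
  have "x * y * z = (x * z * x) * y * (z * x * z)" using xzx zxz by simp
  also have "\<dots> = x * z * (x * (y * z) * x) * z" by (simp add: mult.assoc)
  also have "\<dots> = (x * z * x) * z" using xyzx by (simp add: mult.assoc)
  also have "\<dots> = x * z" using xzx by simp
  finally show ?thesis .
qed

lemma B_mult:
  fixes e :: "'m::{monoid_mult,finite}"
  assumes r: "rectangular TYPE('m)" and e: "idem e"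
    and mU: "e * m * e \<in> units_at e" and nU: "e * n * e \<in> units_at e"
  shows "e * m * n * e = (e * m * e) * (e * n * e)"
proof -
  obtain h where h: "h \<in> corner e" "e * m * e * h = e" using mU unfolding units_at_iff by blast
  obtain h' where h': "h' \<in> corner e" "h' * (e * n * e) = e" using nU unfolding units_at_iff by blast
  define a where "a = e * m"
  define b where "b = n * e"
  have aw: "e = a * (e * h)" using h unfolding a_def by (simp add: mult.assoc)
  have ea: "a = e * a" unfolding a_def using idemD2[OF e] by simp
  have wb: "e = (h' * e) * b" using h' unfolding b_def by (simp add: mult.assoc)
  have be: "b = b * e" unfolding b_def using idemD[OF e] by (simp add: mult.assoc)
  define k1 where "k1 = (e * h) * a"
  define k2 where "k2 = b * (h' * e)"
  have K1: "idem k1" "ideal k1 = ideal e" "a * k1 = a" using Rk[OF e aw ea] unfolding k1_def by auto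
  have K2: "idem k2" "ideal k2 = ideal e" "k2 * b = b" using Lk[OF e wb be] unfolding k2_def by auto
  have band: "k1 * e * k2 = k1 * k2"
    using band_xyz[OF r K1(1) e K2(1)] K1(2) K2(2) by simp
  have "e * m * n * e = a * b" unfolding a_def b_def by (simp add: mult.assoc)
  also have "\<dots> = a * k1 * (k2 * b)" using K1(3) K2(3) by simp
  also have "\<dots> = a * (k1 * e * k2) * b" using band by (simp add: mult.assoc)
  also have "\<dots> = (a * k1) * e * (k2 * b)" by (simp add: mult.assoc)
  also have "\<dots> = a * e * b" using K1(3) K2(3) by simp
  also have "\<dots> = (e * m * e) * (e * n * e)"
    unfolding a_def b_def using idemD[OF e] idemD2[OF e] by (simp add: mult.assoc)
  finally show ?thesis .
qed

lemma D_left: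
  fixes e :: "'m::{monoid_mult,finite}"
  assumes r: "rectangular TYPE('m)" and e: "idem e" and U: "e * m * n * e \<in> units_at e"
  shows "e * m * e \<in> units_at e"
proof -
  obtain h where h: "h \<in> corner e" "e * m * n * e * h = e" using U unfolding units_at_iff by blast
  have aw: "e = (e * m) * (n * e * h)" using h by (simp add: mult.assoc)
  have ea: "e * m = e * (e * m)" using idemD2[OF e] by simp
  show ?thesis using R_unit[OF r e aw ea] by simp
qed

lemma D_right:
  fixes e :: "'m::{monoid_mult,finite}"
  assumes r: "rectangular TYPE('m)" and e: "idem e" and U: "e * m * n * e \<in> units_at e"
  shows "e * n * e \<in> units_at e"
proof -
  obtain h where h: "h \<in> corner e" "h * (e * m * n * e) = e" using U unfolding units_at_iff by blast
  have wb: "e = (h * e * m) * (n * e)" using h by (simp add: mult.assoc)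
  have be: "n * e = (n * e) * e" using idemD[OF e] by (simp add: mult.assoc)
  show ?thesis using L_unit[OF r e wb be] by (simp add: mult.assoc)
qed

lemma A_unit:
  fixes e :: "'m::{monoid_mult,finite}"
  assumes r: "rectangular TYPE('m)" and e: "idem e" and f: "idem f" and ef: "e \<in> ideal f"
  shows "e * f * e \<in> units_at e"
proof -
  obtain x y where xy: "e = x * f * y" using ef unfolding ideal_iff by blast
  define e' where "e' = f * y * e * x * f"
  have "e' * e' = f * y * e * (x * (f * f) * y) * e * x * f" unfolding e'_def by (simp add: mult.assoc)
  also have "\<dots> = f * y * (e * e * e) * x * f" using idemD[OF f] xy by (simp add: mult.assoc)
  also have "\<dots> = e'" unfolding e'_def using idemD[OF e] by simp
  finally have ie': "idem e'" unfolding idem_def .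
  have "e' = (f * y) * e * (x * f)" unfolding e'_def by (simp add: mult.assoc)
  then have 1: "e' \<in> ideal e" unfolding ideal_iff by blast
  have "e = e * e * e" using idemD[OF e] by simp
  also have "\<dots> = (x * f * y) * e * (x * f * y)" using xy by simp
  also have "\<dots> = x * e' * y" unfolding e'_def by (simp add: mult.assoc)
  finally have 2: "e \<in> ideal e'" unfolding ideal_iff by blast
  have J: "ideal e = ideal e'" using ideal_eqI[OF 2 1] .
  have s1: "idem (e * e')" "ideal (e * e') = ideal e" using rectD[OF r e ie' J] by auto
  have s2: "idem (e * e' * e)" "ideal (e * e' * e) = ideal (e * e')" using rectD[OF r s1(1) e s1(2)] by auto
  have "e \<in> ideal (e * e' * e)" using s2(2) s1(2) self_in_ideal[of e] by simp
  then have ee: "e * e' * e = e" using idem_J_eq[OF e corner_eme s2(1)] by blast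
  have aw: "e = (e * f) * (y * e * x * f * e)" using ee unfolding e'_def by (simp add: mult.assoc)
  have ea: "e * f = e * (e * f)" using idemD2[OF e] by simp
  show ?thesis using R_unit[OF r e aw ea] by simp
qed

lemma powG:
  fixes e :: "'m::{monoid_mult,finite}"
  assumes r: "rectangular TYPE('m)" and e: "idem e" and mU: "e * m * e \<in> units_at e"
  shows "k \<ge> 1 \<Longrightarrow> e * m ^ k * e \<in> units_at e"
proof (induction k)
  case 0 then show ?case by simp
next
  case (Suc k)
  show ?case
  proof (cases "k = 0")
    case True then show ?thesis using mU by simp
  next
    case False
    then have IH: "e * m ^ k * e \<in> units_at e" using Suc by simp
    have "e * m ^ Suc k * e = e * m ^ k * m * e" by (simp only: power_Suc2 mult.assoc)
    also have "\<dots> = (e * m ^ k * e) * (e * m * e)" using B_mult[OF r e IH mU] .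
    finally show ?thesis using units_mult[OF e IH mU] by simp
  qed
qed

lemma U_char:
  fixes e :: "'m::{monoid_mult,finite}"
  assumes r: "rectangular TYPE('m)" and e: "idem e"
  shows "e \<in> ideal (omega m) \<longleftrightarrow> e * m * e \<in> units_at e"
proof -
  obtain N where N: "N \<ge> 1" "omega m = m ^ N" "idem (omega m)" using omega_props[of m] by auto
  show ?thesis
  proof
    assume "e \<in> ideal (omega m)"
    then have "e * m ^ N * e \<in> units_at e" using A_unit[OF r e N(3)] N(2) by simp
    moreover obtain M where "N = Suc M" using N(1) by (cases N) auto
    ultimately have "e * m * m ^ M * e \<in> units_at e" by (simp add: mult.assoc)
    then show "e * m * e \<in> units_at e" using D_left[OF r e] by blast
  next
    assume "e * m * e \<in> units_at e"
    then have "e * m ^ N * e \<in> units_at e" using powG[OF r e _ N(1)] by blast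
    then obtain h where h: "h \<in> corner e" "e * m ^ N * e * h = e" unfolding units_at_iff by blast
    then have "e = e * m ^ N * (e * h)" by (simp add: mult.assoc)
    then have "e = e * omega m * (e * h)" using N(2) by simp
    then show "e \<in> ideal (omega m)" using N(2) unfolding ideal_iff by blast
  qed
qed

definition subsp :: "('k::field \<Rightarrow> 'a::ab_group_add \<Rightarrow> 'a) \<Rightarrow> ('x \<Rightarrow> 'a) set \<Rightarrow> bool" where
  "subsp sc I \<longleftrightarrow> (\<lambda>x. 0) \<in> I \<and> (\<forall>u\<in>I. \<forall>v\<in>I. fadd u v \<in> I) \<and> (\<forall>c. \<forall>u\<in>I. fscale sc c u \<in> I)"

lemma quot_space_eq:
  "quot_space (D, fadd, fscale sc) I =
    (coset fadd I ` D, \<lambda>x y. {fadd u v | u v. u \<in> x \<and> v \<in> y},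
     \<lambda>c x. {fadd (fscale sc c u) i | u i. u \<in> x \<and> i \<in> I})"
  unfolding quot_space_def by simp

context
  fixes sc :: "'k::field \<Rightarrow> 'a::ab_group_add \<Rightarrow> 'a" and I :: "('x \<Rightarrow> 'a) set"
  assumes vs: "vector_space sc" and sI: "subsp sc I"
begin

interpretation v: vector_space sc by (rule vs)

lemma I0: "(\<lambda>x. 0) \<in> I" using sI unfolding subsp_def by blast
lemma Iadd: "u \<in> I \<Longrightarrow> v \<in> I \<Longrightarrow> (\<lambda>x. u x + v x) \<in> I"
  using sI unfolding subsp_def fadd_def by blast
lemma Isc: "u \<in> I \<Longrightarrow> (\<lambda>x. sc c (u x)) \<in> I"
  using sI unfolding subsp_def fscale_def by blast
lemma Ineg: "u \<in> I \<Longrightarrow> (\<lambda>x. - u x) \<in> I"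
  using Isc[of u "-1"] by simp
lemma Idiff: "u \<in> I \<Longrightarrow> v \<in> I \<Longrightarrow> (\<lambda>x. u x - v x) \<in> I"
  using Iadd[of u "\<lambda>x. - v x"] Ineg[of v] by simp

lemma coset_mem: "u \<in> coset fadd I d \<longleftrightarrow> (\<lambda>x. u x - d x) \<in> I"
proof
  assume "u \<in> coset fadd I d"
  then obtain i where i: "i \<in> I" "u = fadd d i" unfolding coset_def by blast
  then have "(\<lambda>x. u x - d x) = i" unfolding fadd_def by auto
  then show "(\<lambda>x. u x - d x) \<in> I" using i by simp
next
  assume "(\<lambda>x. u x - d x) \<in> I"
  moreover have "u = fadd d (\<lambda>x. u x - d x)" unfolding fadd_def by auto
  ultimately show "u \<in> coset fadd I d" unfolding coset_def by blast
qed

lemma coset_self: "d \<in> coset fadd I d"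
  unfolding coset_mem using I0 by simp

lemma coset_eq: "coset fadd I d = coset fadd I d' \<longleftrightarrow> (\<lambda>x. d x - d' x) \<in> I"
proof
  assume "coset fadd I d = coset fadd I d'"
  then have "d \<in> coset fadd I d'" using coset_self by blast
  then show "(\<lambda>x. d x - d' x) \<in> I" unfolding coset_mem .
next
  assume dd: "(\<lambda>x. d x - d' x) \<in> I"
  show "coset fadd I d = coset fadd I d'"
  proof (intro Set.set_eqI)
    fix u
    have e1: "(\<lambda>x. u x - d' x) = (\<lambda>x. (u x - d x) + (d x - d' x))" by auto
    have e2: "(\<lambda>x. u x - d x) = (\<lambda>x. (u x - d' x) - (d x - d' x))" by auto
    show "u \<in> coset fadd I d \<longleftrightarrow> u \<in> coset fadd I d'"
      unfolding coset_mem
    proof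
      assume "(\<lambda>x. u x - d x) \<in> I"
      then show "(\<lambda>x. u x - d' x) \<in> I" unfolding e1 using Iadd dd by blast
    next
      assume "(\<lambda>x. u x - d' x) \<in> I"
      then show "(\<lambda>x. u x - d x) \<in> I" unfolding e2 using Idiff dd by blast
    qed
  qed
qed

lemma qadd_coset:
  "{fadd u v | u v. u \<in> coset fadd I d \<and> v \<in> coset fadd I d'} = coset fadd I (fadd d d')"
proof (intro Set.set_eqI iffI)
  fix w assume "w \<in> {fadd u v | u v. u \<in> coset fadd I d \<and> v \<in> coset fadd I d'}"
  then obtain u v where uv: "w = fadd u v" "(\<lambda>x. u x - d x) \<in> I" "(\<lambda>x. v x - d' x) \<in> I"
    unfolding coset_mem by blast
  have "(\<lambda>x. w x - fadd d d' x) = (\<lambda>x. (u x - d x) + (v x - d' x))"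
    using uv(1) unfolding fadd_def by (auto simp: algebra_simps)
  then show "w \<in> coset fadd I (fadd d d')" unfolding coset_mem using Iadd[OF uv(2,3)] by simp
next
  fix w assume "w \<in> coset fadd I (fadd d d')"
  then have w: "(\<lambda>x. w x - fadd d d' x) \<in> I" unfolding coset_mem .
  define u where "u = (\<lambda>x. w x - d' x)"
  have "(\<lambda>x. u x - d x) = (\<lambda>x. w x - fadd d d' x)" unfolding u_def fadd_def by (auto simp: algebra_simps)
  then have u: "u \<in> coset fadd I d" unfolding coset_mem using w by simp
  have "w = fadd u d'" unfolding u_def fadd_def by auto
  then show "w \<in> {fadd u v | u v. u \<in> coset fadd I d \<and> v \<in> coset fadd I d'}"
    using u coset_self by blast
qed

lemma qscale_coset:
  "{fadd (fscale sc c u) i | u i. u \<in> coset fadd I d \<and> i \<in> I} = coset fadd I (fscale sc c d)"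
proof (intro Set.set_eqI iffI)
  fix w assume "w \<in> {fadd (fscale sc c u) i | u i. u \<in> coset fadd I d \<and> i \<in> I}"
  then obtain u i where ui: "w = fadd (fscale sc c u) i" "(\<lambda>x. u x - d x) \<in> I" "i \<in> I"
    unfolding coset_mem by blast
  have "(\<lambda>x. w x - fscale sc c d x) = (\<lambda>x. sc c (u x - d x) + i x)"
    using ui(1) unfolding fadd_def fscale_def by (auto simp: v.scale_right_diff_distrib)
  then show "w \<in> coset fadd I (fscale sc c d)" unfolding coset_mem
    using Iadd[OF Isc[OF ui(2)] ui(3)] by simp
next
  fix w assume "w \<in> coset fadd I (fscale sc c d)"
  then have w: "(\<lambda>x. w x - fscale sc c d x) \<in> I" unfolding coset_mem .
  have "w = fadd (fscale sc c d) (\<lambda>x. w x - fscale sc c d x)" unfolding fadd_def by auto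
  then show "w \<in> {fadd (fscale sc c u) i | u i. u \<in> coset fadd I d \<and> i \<in> I}"
    using w coset_self by blast
qed

lemma quot_iso:
  fixes D :: "('x \<Rightarrow> 'a) set" and L :: "('x \<Rightarrow> 'a) \<Rightarrow> 'c"
  assumes ID: "I \<subseteq> D"
    and Dadd: "\<And>u v. u \<in> D \<Longrightarrow> v \<in> D \<Longrightarrow> fadd u v \<in> D"
    and Dsc: "\<And>c u. u \<in> D \<Longrightarrow> fscale sc c u \<in> D"
    and Lsurj: "L ` D = C"
    and Ladd: "\<And>u v. u \<in> D \<Longrightarrow> v \<in> D \<Longrightarrow> L (fadd u v) = a2 (L u) (L v)"
    and Lsc: "\<And>c u. u \<in> D \<Longrightarrow> L (fscale sc c u) = s2 c (L u)"
    and Lker: "\<And>u v. u \<in> D \<Longrightarrow> v \<in> D \<Longrightarrow> L u = L v \<longleftrightarrow> (\<lambda>x. u x - v x) \<in> I"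
  shows "lin_iso (quot_space (D, fadd, fscale sc) I) (C, a2, s2)"
proof -
  define \<Phi> where "\<Phi> = (\<lambda>x. L (SOME u. u \<in> x))"
  have Phi: "\<Phi> (coset fadd I d) = L d" if d: "d \<in> D" for d
  proof -
    have "\<exists>u. u \<in> coset fadd I d" using coset_self by blast
    then have u: "(SOME u. u \<in> coset fadd I d) \<in> coset fadd I d" by (rule someI_ex)
    define u where "u = (SOME u. u \<in> coset fadd I d)"
    have ud: "(\<lambda>x. u x - d x) \<in> I" using u unfolding u_def coset_mem .
    have "u = fadd d (\<lambda>x. u x - d x)" unfolding fadd_def by auto
    moreover have "(\<lambda>x. u x - d x) \<in> D" using ud ID by blast
    then have "fadd d (\<lambda>x. u x - d x) \<in> D" using Dadd[OF d] by blast
    ultimately have uD: "u \<in> D" by simp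
    have "L u = L d" using Lker[OF uD d] ud by simp
    then show ?thesis unfolding \<Phi>_def u_def by simp
  qed
  have bij: "bij_betw \<Phi> (coset fadd I ` D) C"
  proof (rule bij_betw_imageI)
    show "inj_on \<Phi> (coset fadd I ` D)"
    proof (rule inj_onI)
      fix x y assume "x \<in> coset fadd I ` D" "y \<in> coset fadd I ` D" and eq: "\<Phi> x = \<Phi> y"
      then obtain d d' where dd: "d \<in> D" "d' \<in> D" "x = coset fadd I d" "y = coset fadd I d'" by blast
      then have "L d = L d'" using eq Phi by simp
      then have "(\<lambda>x. d x - d' x) \<in> I" using Lker dd by blast
      then show "x = y" using dd coset_eq by simp
    qed
    show "\<Phi> ` coset fadd I ` D = C"
      using Lsurj Phi by (auto simp: image_image image_def)
  qed
  have add: "\<Phi> ({fadd u v | u v. u \<in> x \<and> v \<in> y}) = a2 (\<Phi> x) (\<Phi> y)"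
    if xD: "x \<in> coset fadd I ` D" and yD: "y \<in> coset fadd I ` D" for x y
  proof -
    obtain d d' where dd: "d \<in> D" "d' \<in> D" "x = coset fadd I d" "y = coset fadd I d'" using xD yD by blast
    show ?thesis using dd qadd_coset Phi Ladd Dadd by simp
  qed
  have sc: "\<Phi> ({fadd (fscale sc c u) i | u i. u \<in> x \<and> i \<in> I}) = s2 c (\<Phi> x)"
    if xD: "x \<in> coset fadd I ` D" for x c
  proof -
    obtain d where dd: "d \<in> D" "x = coset fadd I d" using xD by blast
    show ?thesis using dd qscale_coset Phi Lsc Dsc by simp
  qed
  show ?thesis unfolding lin_iso_def quot_space_eq using bij add sc by auto
qed

end

locale ctx =
  fixes scale :: "'k::field \<Rightarrow> 'a::ab_group_add \<Rightarrow> 'a"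
    and lact :: "'m::{monoid_mult,finite} \<Rightarrow> 'a \<Rightarrow> 'a"
    and ract :: "'a \<Rightarrow> 'm \<Rightarrow> 'a"
    and X :: "'m set" and e :: 'm
  assumes rect: "rectangular TYPE('m)" and e: "idem e" and XE: "ideal e = X"
    and modA: "GGop_module scale lact ract (units_at e) e"
begin

lemma vs: "vector_space scale" using modA unfolding GGop_module_def by blast

sublocale v: vector_space scale by (rule vs)

abbreviation G where "G \<equiv> units_at e"

lemma l_add: "g \<in> G \<Longrightarrow> lact g (a + b) = lact g a + lact g b"
  using modA unfolding GGop_module_def by blast
lemma r_add: "g \<in> G \<Longrightarrow> ract (a + b) g = ract a g + ract b g"
  using modA unfolding GGop_module_def by blast
lemma l_sc: "g \<in> G \<Longrightarrow> lact g (scale c a) = scale c (lact g a)"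
  using modA unfolding GGop_module_def by blast
lemma r_sc: "g \<in> G \<Longrightarrow> ract (scale c a) g = scale c (ract a g)"
  using modA unfolding GGop_module_def by blast
lemma l_unit: "lact e a = a"
  using modA unfolding GGop_module_def by blast
lemma r_unit: "ract a e = a"
  using modA unfolding GGop_module_def by blast
lemma l_comp: "g \<in> G \<Longrightarrow> h \<in> G \<Longrightarrow> lact g (lact h a) = lact (g * h) a"
  using modA unfolding GGop_module_def by blast
lemma r_comp: "g \<in> G \<Longrightarrow> h \<in> G \<Longrightarrow> ract (ract a g) h = ract a (g * h)"
  using modA unfolding GGop_module_def by blast
lemma lr_comm: "g \<in> G \<Longrightarrow> h \<in> G \<Longrightarrow> lact g (ract a h) = ract (lact g a) h"
  using modA unfolding GGop_module_def by blast

lemma l_zero: "g \<in> G \<Longrightarrow> lact g 0 = 0"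
  using l_add[of g 0 0] by simp
lemma r_zero: "g \<in> G \<Longrightarrow> ract 0 g = 0"
  using r_add[of g 0 0] by simp
lemma l_minus: "g \<in> G \<Longrightarrow> lact g (- a) = - lact g a"
proof -
  assume g: "g \<in> G"
  have "lact g a + lact g (- a) = 0" using l_add[OF g, of a "-a"] l_zero[OF g] by simp
  from minus_unique[OF this] show ?thesis by simp
qed
lemma r_minus: "g \<in> G \<Longrightarrow> ract (- a) g = - ract a g"
proof -
  assume g: "g \<in> G"
  have "ract a g + ract (- a) g = 0" using r_add[OF g, of a "-a"] r_zero[OF g] by simp
  from minus_unique[OF this] show ?thesis by simp
qed
lemma l_diff: "g \<in> G \<Longrightarrow> lact g (a - b) = lact g a - lact g b"
  using l_add[of g a "-b"] l_minus[of g b] by simp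
lemma r_diff: "g \<in> G \<Longrightarrow> ract (a - b) g = ract a g - ract b g"
  using r_add[of g a "-b"] r_minus[of g b] by simp
lemma l_sum: "g \<in> G \<Longrightarrow> lact g (sum f A) = (\<Sum>x\<in>A. lact g (f x))"
  by (induction A rule: infinite_finite_induct) (simp_all add: l_zero l_add)
lemma r_sum: "g \<in> G \<Longrightarrow> ract (sum f A) g = (\<Sum>x\<in>A. ract (f x) g)"
  by (induction A rule: infinite_finite_induct) (simp_all add: r_zero r_add)

lemma eG: "e \<in> G" using e_unit[OF e] .
lemma eee: "e * e * e = e" using idemD[OF e] by simp

lemma sigU: "X \<subseteq> sigma m \<longleftrightarrow> e * m * e \<in> G"
  unfolding sigma_def XE[symmetric] ideal_sub_iff using U_char[OF rect e] .

lemma rl_eq: "rho_left X e lact m a = (if e * m * e \<in> G then lact (e * m * e) a else 0)"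
  unfolding rho_left_def sigU ..
lemma rr_eq: "rho_right X e ract a m = (if e * m * e \<in> G then ract a (e * m * e) else 0)"
  unfolding rho_right_def sigU ..

lemma U_mult_eq: "e * m * e \<in> G \<Longrightarrow> e * n * e \<in> G \<Longrightarrow> e * (m * n) * e = (e * m * e) * (e * n * e)"
proof -
  assume a: "e * m * e \<in> G" "e * n * e \<in> G"
  have "e * (m * n) * e = e * m * n * e" by (simp only: mult.assoc)
  also have "\<dots> = (e * m * e) * (e * n * e)" using B_mult[OF rect e a] .
  finally show ?thesis .
qed

lemma U_mult_iff: "e * (m * n) * e \<in> G \<longleftrightarrow> e * m * e \<in> G \<and> e * n * e \<in> G"
proof
  assume "e * (m * n) * e \<in> G"
  then have "e * m * n * e \<in> G" by (simp add: mult.assoc)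
  then show "e * m * e \<in> G \<and> e * n * e \<in> G" using D_left[OF rect e] D_right[OF rect e] by blast
next
  assume a: "e * m * e \<in> G \<and> e * n * e \<in> G"
  then have "e * (m * n) * e = (e * m * e) * (e * n * e)" using U_mult_eq by blast
  moreover have "(e * m * e) * (e * n * e) \<in> G" using units_mult[OF e] a by blast
  ultimately show "e * (m * n) * e \<in> G" by simp
qed

abbreviation rl where "rl m a \<equiv> rho_left X e lact m a"
abbreviation rr where "rr a m \<equiv> rho_right X e ract a m"

lemma rl_zero: "rl m 0 = 0" unfolding rl_eq by (simp add: l_zero)
lemma rr_zero: "rr 0 m = 0" unfolding rr_eq by (simp add: r_zero)
lemma rl_add: "rl m (a + b) = rl m a + rl m b" unfolding rl_eq by (simp add: l_add)
lemma rr_add: "rr (a + b) m = rr a m + rr b m" unfolding rr_eq by (simp add: r_add)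
lemma rl_diff: "rl m (a - b) = rl m a - rl m b" unfolding rl_eq by (simp add: l_diff)
lemma rr_diff: "rr (a - b) m = rr a m - rr b m" unfolding rr_eq by (simp add: r_diff)
lemma rl_sc: "rl m (scale c a) = scale c (rl m a)" unfolding rl_eq by (simp add: l_sc)
lemma rr_sc: "rr (scale c a) m = scale c (rr a m)" unfolding rr_eq by (simp add: r_sc)
lemma rl_e: "rl e a = a" unfolding rl_eq using eee eG l_unit by simp
lemma rr_e: "rr a e = a" unfolding rr_eq using eee eG r_unit by simp

lemma rl_mult: "rl (m * n) a = rl m (rl n a)"
proof (cases "e * m * e \<in> G \<and> e * n * e \<in> G")
  case True
  have u: "e * (m * n) * e \<in> G" using True U_mult_iff by blast
  have eq: "e * (m * n) * e = (e * m * e) * (e * n * e)" using True U_mult_eq by blast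
  have "rl (m * n) a = lact (e * (m * n) * e) a" unfolding rl_eq using u by simp
  also have "\<dots> = lact ((e * m * e) * (e * n * e)) a" using eq by simp
  also have "\<dots> = lact (e * m * e) (lact (e * n * e) a)" using l_comp True by simp
  also have "\<dots> = rl m (rl n a)" unfolding rl_eq using True by simp
  finally show ?thesis .
next
  case False
  then have "e * (m * n) * e \<notin> G" using U_mult_iff by blast
  then show ?thesis unfolding rl_eq using False l_zero by auto
qed

lemma rr_mult: "rr a (m * n) = rr (rr a m) n"
proof (cases "e * m * e \<in> G \<and> e * n * e \<in> G")
  case True
  have u: "e * (m * n) * e \<in> G" using True U_mult_iff by blast
  have eq: "e * (m * n) * e = (e * m * e) * (e * n * e)" using True U_mult_eq by blast
  have "rr a (m * n) = ract a (e * (m * n) * e)" unfolding rr_eq using u by simp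
  also have "\<dots> = ract a ((e * m * e) * (e * n * e))" using eq by simp
  also have "\<dots> = ract (ract a (e * m * e)) (e * n * e)" using r_comp True by simp
  also have "\<dots> = rr (rr a m) n" unfolding rr_eq using True by simp
  finally show ?thesis .
next
  case False
  then have "e * (m * n) * e \<notin> G" using U_mult_iff by blast
  then show ?thesis unfolding rr_eq using False r_zero by auto
qed

lemma rl_rr: "rl m (rr a n) = rr (rl m a) n"
  unfolding rl_eq rr_eq using lr_comm l_zero r_zero by auto

abbreviation DerM where "DerM \<equiv> Der_M X e lact ract"
abbreviation InnM where "InnM \<equiv> Inn_M X e lact ract"

lemma derD: "d \<in> DerM \<Longrightarrow> d (m * n) = rl m (d n) + rr (d m) n"
  unfolding Der_M_def by blast

lemma der_e: assumes d: "d \<in> DerM" shows "d e = 0"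
proof -
  have "d (e * e) = rl e (d e) + rr (d e) e" using derD[OF d] .
  then have "d e = d e + d e" using idemD[OF e] rl_e rr_e by simp
  then show ?thesis by simp
qed

lemma der_em: assumes d: "d \<in> DerM" shows "d (e * m) = d m"
  using derD[OF d, of e m] rl_e der_e[OF d] rr_zero by simp

lemma der_me: assumes d: "d \<in> DerM" shows "d (m * e) = d m"
  using derD[OF d, of m e] rr_e der_e[OF d] rl_zero by simp

lemma der_eme: assumes d: "d \<in> DerM" shows "d (e * m * e) = d m"
  using der_em[OF d] der_me[OF d] by (simp add: mult.assoc)

lemma rr_en: "rr a (e * n) = rr a n"
proof -
  have "e * (e * n) * e = e * n * e" using idemD2[OF e] by (simp add: mult.assoc)
  then show ?thesis unfolding rr_eq by simp
qed

lemma rl_me: "rl (m * e) a = rl m a"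
proof -
  have "e * (m * e) * e = e * m * e" using idemD[OF e] by (simp add: mult.assoc)
  then show ?thesis unfolding rl_eq by simp
qed

lemma der_mid: assumes d: "d \<in> DerM" shows "d (m * e * n) = d (m * n)"
proof -
  have "d (m * (e * n)) = rl m (d (e * n)) + rr (d m) (e * n)" using derD[OF d] .
  also have "\<dots> = rl m (d n) + rr (d m) n" using der_em[OF d] rr_en by simp
  also have "\<dots> = d (m * n)" using derD[OF d] by simp
  finally show ?thesis by (simp add: mult.assoc)
qed

lemma DerM_add: "d \<in> DerM \<Longrightarrow> d' \<in> DerM \<Longrightarrow> fadd d d' \<in> DerM"
  unfolding Der_M_def fadd_def by (auto simp: rl_add rr_add algebra_simps)

lemma DerM_sc: "d \<in> DerM \<Longrightarrow> fscale scale c d \<in> DerM"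
  unfolding Der_M_def fscale_def by (auto simp: rl_sc rr_sc v.scale_right_distrib)

lemma DerM_diff: "d \<in> DerM \<Longrightarrow> d' \<in> DerM \<Longrightarrow> (\<lambda>x. d x - d' x) \<in> DerM"
  unfolding Der_M_def by (auto simp: rl_diff rr_diff algebra_simps)

lemma inn_der: "(\<lambda>m. rl m a - rr a m) \<in> DerM"
  unfolding Der_M_def
  by (auto simp: rl_mult rr_mult rl_diff rr_diff rl_rr algebra_simps)

lemma InnM_sub: "InnM \<subseteq> DerM"
  unfolding Inn_M_def using inn_der by blast

lemma InnM_subsp: "subsp scale InnM"
  unfolding subsp_def
proof (intro conjI ballI allI)
  show "(\<lambda>x. 0) \<in> InnM" unfolding Inn_M_def
    by (rule CollectI, rule exI[of _ 0]) (simp add: rl_zero rr_zero)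
next
  fix u v assume "u \<in> InnM" "v \<in> InnM"
  then obtain a b where "u = (\<lambda>m. rl m a - rr a m)" "v = (\<lambda>m. rl m b - rr b m)"
    unfolding Inn_M_def by blast
  then have "fadd u v = (\<lambda>m. rl m (a + b) - rr (a + b) m)"
    unfolding fadd_def by (auto simp: rl_add rr_add algebra_simps)
  then show "fadd u v \<in> InnM" unfolding Inn_M_def by blast
next
  fix c u assume "u \<in> InnM"
  then obtain a where "u = (\<lambda>m. rl m a - rr a m)" unfolding Inn_M_def by blast
  then have "fscale scale c u = (\<lambda>m. rl m (scale c a) - rr (scale c a) m)"
    unfolding fscale_def by (auto simp: rl_sc rr_sc v.scale_right_diff_distrib)
  then show "fscale scale c u \<in> InnM" unfolding Inn_M_def by blast
qed

abbreviation DerG where "DerG \<equiv> Der_G G lact ract"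
abbreviation InnG where "InnG \<equiv> Inn_G G lact ract"

lemma DerG_add: "d \<in> DerG \<Longrightarrow> d' \<in> DerG \<Longrightarrow> fadd d d' \<in> DerG"
  unfolding Der_G_def fadd_def by (auto simp: l_add r_add algebra_simps)

lemma DerG_sc: "d \<in> DerG \<Longrightarrow> fscale scale c d \<in> DerG"
  unfolding Der_G_def fscale_def by (auto simp: l_sc r_sc v.scale_right_distrib)

lemma InnG_sub: "InnG \<subseteq> DerG"
proof
  fix u assume "u \<in> InnG"
  then obtain a where a: "u = (\<lambda>g. if g \<in> G then lact g a - ract a g else 0)" unfolding Inn_G_def by blast
  have "u (g * h) = lact g (u h) + ract (u g) h" if g: "g \<in> G" and h: "h \<in> G" for g h
  proof -
    have gh: "g * h \<in> G" using units_mult[OF e g h] .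
    show ?thesis using a g h gh
      by (simp add: l_diff r_diff l_comp r_comp lr_comm algebra_simps)
  qed
  then show "u \<in> DerG" unfolding Der_G_def using a by auto
qed

lemma InnG_subsp: "subsp scale InnG"
  unfolding subsp_def
proof (intro conjI ballI allI)
  show "(\<lambda>x. 0) \<in> InnG" unfolding Inn_G_def
    by (rule CollectI, rule exI[of _ 0]) (auto simp: l_zero r_zero)
next
  fix u v assume "u \<in> InnG" "v \<in> InnG"
  then obtain a b where "u = (\<lambda>g. if g \<in> G then lact g a - ract a g else 0)"
    "v = (\<lambda>g. if g \<in> G then lact g b - ract b g else 0)"
    unfolding Inn_G_def by blast
  then have "fadd u v = (\<lambda>g. if g \<in> G then lact g (a + b) - ract (a + b) g else 0)"
    unfolding fadd_def by (auto simp: l_add r_add algebra_simps)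
  then show "fadd u v \<in> InnG" unfolding Inn_G_def by blast
next
  fix c u assume "u \<in> InnG"
  then obtain a where "u = (\<lambda>g. if g \<in> G then lact g a - ract a g else 0)" unfolding Inn_G_def by blast
  then have "fscale scale c u = (\<lambda>g. if g \<in> G then lact g (scale c a) - ract (scale c a) g else 0)"
    unfolding fscale_def by (auto simp: l_sc r_sc v.scale_right_diff_distrib)
  then show "fscale scale c u \<in> InnG" unfolding Inn_G_def by blast
qed

end

context ctx
begin

abbreviation IX where "IX \<equiv> I_X e"

lemma IX_iff: "x \<in> IX \<longleftrightarrow> x \<in> corner e \<and> x \<notin> G"
  unfolding I_X_def by blast

lemma IX_eq: "x \<in> IX \<Longrightarrow> e * x * e = x"
  using IX_iff corner_iff[OF e] by blast

lemma IX_notU: "x \<in> IX \<Longrightarrow> e * x * e \<notin> G"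
  using IX_eq IX_iff by simp

lemma eme_IX: "e * m * e \<notin> G \<Longrightarrow> e * m * e \<in> IX"
  using IX_iff corner_eme by blast

lemma finite_IX: "finite IX" by simp

lemma nabla_notU: assumes "m \<in> nabla X" shows "e * m * e \<notin> G"
proof
  assume "e * m * e \<in> G"
  then obtain h where h: "h \<in> corner e" "e * m * e * h = e" unfolding units_at_iff by blast
  then have "e = e * m * (e * h)" by (simp add: mult.assoc)
  then have "e \<in> ideal m" unfolding ideal_iff by blast
  then have "X \<subseteq> ideal m" using XE ideal_sub_iff by blast
  then show False using assms unfolding nabla_def by blast
qed

lemma IX_nabla: assumes x: "x \<in> IX" shows "x \<in> nabla X"
proof -
  have "\<not> X \<subseteq> ideal x"
  proof
    assume "X \<subseteq> ideal x"
    then have "e \<in> ideal x" using XE self_in_ideal by blast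
    then have "x \<in> G" using stab[OF e _ ] x IX_iff by blast
    then show False using x IX_iff by blast
  qed
  then show ?thesis unfolding nabla_def by blast
qed

lemma IX_mult: assumes x: "x \<in> IX" and y: "y \<in> IX" shows "x * y \<in> IX"
proof -
  have c: "x * y \<in> corner e" using corner_mult[OF e] x y IX_iff by blast
  have "x * y \<notin> G"
  proof
    assume "x * y \<in> G"
    then have "e * (x * y) * e \<in> G" using c corner_iff[OF e] by simp
    then have "e * x * e \<in> G" using U_mult_iff by blast
    then show False using IX_notU[OF x] by blast
  qed
  then show ?thesis using c IX_iff by blast
qed

lemma IX_Zset: "x \<in> IX \<Longrightarrow> y \<in> IX \<Longrightarrow> x * y \<in> Zset X e"
  unfolding Zset_def using IX_mult IX_nabla by blast

lemma Zset_sub: "Zset X e \<subseteq> IX" unfolding Zset_def by blast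

lemma ginvG: "g \<in> G \<Longrightarrow> ginv e g \<in> G" using ginv_props[OF e] by blast
lemma ginv_r: "g \<in> G \<Longrightarrow> g * ginv e g = e" using ginv_props[OF e] by blast
lemma ginv_l: "g \<in> G \<Longrightarrow> ginv e g * g = e" using ginv_props[OF e] by blast
lemma G_l: "g \<in> G \<Longrightarrow> e * g = g" using corner_l[OF e units_corner] by blast
lemma G_r: "g \<in> G \<Longrightarrow> g * e = g" using corner_r[OF e units_corner] by blast
lemma IX_l: "x \<in> IX \<Longrightarrow> e * x = x" using corner_l[OF e] IX_iff by blast
lemma IX_r: "x \<in> IX \<Longrightarrow> x * e = x" using corner_r[OF e] IX_iff by blast

lemma ginv_e: "ginv e e = e"
  using ginv_r[OF eG] G_l[OF ginvG[OF eG]] by simp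

lemma cancel_GG: assumes g: "g \<in> G" and h: "h \<in> G" and x: "x \<in> IX"
  shows "ginv e g * (g * x * h) * ginv e h = x"
proof -
  have "ginv e g * (g * x * h) * ginv e h = (ginv e g * g) * x * (h * ginv e h)" by (simp add: mult.assoc)
  also have "\<dots> = x" using ginv_l[OF g] ginv_r[OF h] IX_l[OF x] IX_r[OF x] by (simp add: mult.assoc)
  finally show ?thesis .
qed

lemma IX_GG: assumes g: "g \<in> G" and h: "h \<in> G" and x: "x \<in> IX" shows "g * x * h \<in> IX"
proof -
  have c: "g * x * h \<in> corner e"
    using corner_mult[OF e] units_corner[OF g] units_corner[OF h] x IX_iff by blast
  have "g * x * h \<notin> G"
  proof
    assume a: "g * x * h \<in> G"
    have "ginv e g * (g * x * h) * ginv e h \<in> G"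
      using units_mult[OF e] ginvG[OF g] ginvG[OF h] a by blast
    then show False using cancel_GG[OF g h x] x IX_iff by simp
  qed
  then show ?thesis using c IX_iff by blast
qed

lemma IX_bij: assumes g: "g \<in> G" and h: "h \<in> G"
  shows "bij_betw (\<lambda>x. g * x * h) IX IX"
proof (rule bij_betw_byWitness[where f' = "\<lambda>y. ginv e g * y * ginv e h"])
  show "\<forall>a\<in>IX. ginv e g * (g * a * h) * ginv e h = a" using cancel_GG[OF g h] by blast
  have gi: "ginv e g \<in> G" "ginv e h \<in> G" using ginvG g h by auto
  have "g * (ginv e g * y * ginv e h) * h = y" if y: "y \<in> IX" for y
  proof -
    have "g * (ginv e g * y * ginv e h) * h = (g * ginv e g) * y * (ginv e h * h)" by (simp add: mult.assoc)
    also have "\<dots> = y" using ginv_r[OF g] ginv_l[OF h] IX_l[OF y] IX_r[OF y] by (simp add: mult.assoc)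
    finally show ?thesis .
  qed
  then show "\<forall>a'\<in>IX. g * (ginv e g * a' * ginv e h) * h = a'" by blast
  show "(\<lambda>x. g * x * h) ` IX \<subseteq> IX" using IX_GG[OF g h] by blast
  show "(\<lambda>y. ginv e g * y * ginv e h) ` IX \<subseteq> IX" using IX_GG[OF gi] by blast
qed

lemma der_Z: assumes d: "d \<in> DerM" and z: "z \<in> Zset X e" shows "d z = 0"
proof -
  obtain a b where ab: "z = a * b" "a \<in> nabla X" "b \<in> nabla X" using z unfolding Zset_def by blast
  have "d z = rl a (d b) + rr (d a) b" using derD[OF d] ab by simp
  then show ?thesis unfolding rl_eq rr_eq using nabla_notU ab by simp
qed

lemma der_gen: assumes d: "d \<in> DerM" and xy: "(x, y) \<in> gen_rel X e" shows "d x = d y"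
proof -
  have "(x, y) \<in> {(e * m * n * e, e * m * e * n * e) | m n. \<not> X \<subseteq> sigma (m * n)} \<or> (x \<in> Zset X e \<and> y \<in> Zset X e)"
    using xy unfolding gen_rel_def by blast
  then show ?thesis
  proof
    assume "(x, y) \<in> {(e * m * n * e, e * m * e * n * e) | m n. \<not> X \<subseteq> sigma (m * n)}"
    then obtain m n where mn: "x = e * m * n * e" "y = e * m * e * n * e" by blast
    have "d x = d (e * (m * n) * e)" using mn by (simp add: mult.assoc)
    also have "\<dots> = d (m * n)" using der_eme[OF d] .
    also have "\<dots> = d (m * e * n)" using der_mid[OF d] by simp
    also have "\<dots> = d (e * (m * e * n) * e)" using der_eme[OF d] by simp
    also have "\<dots> = d y" using mn by (simp add: mult.assoc)
    finally show ?thesis .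
  next
    assume "x \<in> Zset X e \<and> y \<in> Zset X e"
    then show ?thesis using der_Z[OF d] by simp
  qed
qed

lemma der_sim: assumes d: "d \<in> DerM" and xy: "(x, y) \<in> simX X e" shows "d x = d y"
proof -
  let ?R = "gen_rel X e \<union> (gen_rel X e)\<inverse>"
  have st: "d a = d b" if ab: "(a, b) \<in> ?R" for a b
    using ab der_gen[OF d] by fastforce
  have "d x = d y" if "(x, y) \<in> ?R\<^sup>+"
    using that
  proof (induction rule: trancl_induct)
    case (base y) then show ?case using st by blast
  next
    case (step y z) then show ?case using st[of y z] by simp
  qed
  then show ?thesis using xy unfolding simX_def by auto
qed

lemma der_equiv: assumes d: "d \<in> DerM" and g: "g \<in> G" and h: "h \<in> G" and x: "x \<in> IX"
  shows "d (g * x * h) = lact g (ract (d x) h)"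
proof -
  have xh: "x * h \<in> IX" using IX_GG[OF eG h x] IX_l[OF x] by simp
  have ege: "e * g * e = g" using G_l[OF g] G_r[OF g] by simp
  have ehe: "e * h * e = h" using G_l[OF h] G_r[OF h] by simp
  have "d (x * h) = rl x (d h) + rr (d x) h" using derD[OF d] .
  also have "\<dots> = ract (d x) h" unfolding rl_eq rr_eq using IX_notU[OF x] ehe h by simp
  finally have 1: "d (x * h) = ract (d x) h" .
  have "d (g * (x * h)) = rl g (d (x * h)) + rr (d g) (x * h)" using derD[OF d] .
  also have "\<dots> = lact g (ract (d x) h)" unfolding rl_eq rr_eq using IX_notU[OF xh] ege g 1 by simp
  finally show ?thesis by (simp add: mult.assoc)
qed

definition Phi :: "('m \<Rightarrow> 'a) \<Rightarrow> ('m \<Rightarrow> 'k) \<Rightarrow> 'a" where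
  "Phi d v = (if v \<in> kI e then \<Sum>x\<in>IX. scale (v x) (d x) else 0)"

definition resG :: "('m \<Rightarrow> 'a) \<Rightarrow> 'm \<Rightarrow> 'a" where
  "resG d = (\<lambda>g. if g \<in> G then d g else 0)"

lemma kI_iff: "v \<in> kI e \<longleftrightarrow> (\<forall>y. y \<notin> IX \<longrightarrow> v y = 0)"
  unfolding kI_def by blast

lemma delta_kI: "x \<in> IX \<Longrightarrow> (delta x :: 'm \<Rightarrow> 'k) \<in> kI e"
  unfolding kI_iff delta_def by auto

lemma sum_delta: assumes x0: "x0 \<in> IX"
  shows "(\<Sum>x\<in>IX. scale (delta x0 x :: 'k) (f x)) = f x0"
proof -
  have "(\<Sum>x\<in>IX. scale (delta x0 x) (f x)) = (\<Sum>x\<in>IX. if x = x0 then f x else 0)"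
    by (rule sum.cong) (auto simp: delta_def)
  also have "\<dots> = f x0" using x0 by simp
  finally show ?thesis .
qed

lemma Phi_delta: assumes x0: "x0 \<in> IX" shows "Phi d (delta x0) = d x0"
  unfolding Phi_def using delta_kI[OF x0] sum_delta[OF x0, of d] by simp

lemma W_gens_kI: "(w :: 'm \<Rightarrow> 'k) \<in> W_gens X e \<Longrightarrow> w \<in> kI e"
  unfolding W_gens_def kI_iff simX_def gen_rel_def Zset_def delta_def
  by (auto dest: tranclD tranclD2)

lemma W_X_kI: "(w :: 'm \<Rightarrow> 'k) \<in> W_X X e \<Longrightarrow> w \<in> kI e"
proof -
  assume "w \<in> W_X X e"
  then obtain t r where tr: "w = (\<lambda>y. \<Sum>w\<in>t. r w * w y)" "finite t" "t \<subseteq> W_gens X e"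
    unfolding W_X_def by blast
  show ?thesis unfolding kI_iff
  proof (intro allI impI)
    fix y assume "y \<notin> IX"
    then have z: "\<forall>w'\<in>t. w' y = 0" using tr(3) W_gens_kI kI_iff by blast
    have "(\<Sum>w'\<in>t. r w' * w' y) = 0" by (rule sum.neutral) (use z in simp)
    then show "w y = 0" using tr(1) by simp
  qed
qed

lemma simX_sub: "(a, b) \<in> simX X e \<Longrightarrow> a \<in> IX \<and> b \<in> IX"
  unfolding simX_def gen_rel_def by (auto dest: tranclD tranclD2)

lemma gen_zero: assumes d: "d \<in> DerM" and w: "(w :: 'm \<Rightarrow> 'k) \<in> W_gens X e"
  shows "(\<Sum>x\<in>IX. scale (w x) (d x)) = 0"
proof -
  have "(\<exists>z. w = delta z \<and> z \<in> Zset X e) \<or> (\<exists>a b. w = (\<lambda>y. delta a y - delta b y) \<and> (a, b) \<in> simX X e)"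
    using w unfolding W_gens_def by blast
  then show ?thesis
  proof
    assume "\<exists>z. w = delta z \<and> z \<in> Zset X e"
    then obtain z where z: "w = delta z" "z \<in> Zset X e" by blast
    then show ?thesis using sum_delta[of z d] Zset_sub der_Z[OF d] by auto
  next
    assume "\<exists>a b. w = (\<lambda>y. delta a y - delta b y) \<and> (a, b) \<in> simX X e"
    then obtain a b where ab: "w = (\<lambda>y. delta a y - delta b y)" "(a, b) \<in> simX X e" by blast
    have "(\<Sum>x\<in>IX. scale (w x) (d x)) = (\<Sum>x\<in>IX. scale (delta a x) (d x) - scale (delta b x) (d x))"
      using ab(1) by (simp add: v.scale_left_diff_distrib)
    also have "\<dots> = (\<Sum>x\<in>IX. scale (delta a x) (d x)) - (\<Sum>x\<in>IX. scale (delta b x) (d x))"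
      by (rule sum_subtractf)
    also have "\<dots> = d a - d b" using sum_delta simX_sub[OF ab(2)] by simp
    also have "\<dots> = 0" using der_sim[OF d ab(2)] by simp
    finally show ?thesis .
  qed
qed

lemma gact_kI: "gact e g h (v :: 'm \<Rightarrow> 'k) \<in> kI e"
  unfolding gact_def kI_iff by simp

lemma Phi_HomV: assumes d: "d \<in> DerM" shows "Phi d \<in> HomV scale X e lact ract"
  unfolding HomV_def
proof (intro CollectI conjI allI ballI impI)
  fix v :: "'m \<Rightarrow> 'k" assume "v \<notin> kI e" then show "Phi d v = 0" unfolding Phi_def by simp
next
  fix u v :: "'m \<Rightarrow> 'k" assume u: "u \<in> kI e" and v: "v \<in> kI e"
  have uv: "(\<lambda>y. u y + v y) \<in> kI e" using u v unfolding kI_iff by simp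
  show "Phi d (\<lambda>y. u y + v y) = Phi d u + Phi d v"
    unfolding Phi_def using u v uv by (simp add: v.scale_left_distrib sum.distrib)
next
  fix c :: 'k and v :: "'m \<Rightarrow> 'k" assume v: "v \<in> kI e"
  have cv: "(\<lambda>y. c * v y) \<in> kI e" using v unfolding kI_iff by simp
  show "Phi d (\<lambda>y. c * v y) = scale c (Phi d v)"
    unfolding Phi_def using v cv by (simp add: v.scale_sum_right)
next
  fix w :: "'m \<Rightarrow> 'k" assume w: "w \<in> W_X X e"
  obtain t r where tr: "w = (\<lambda>y. \<Sum>w\<in>t. r w * w y)" "finite t" "t \<subseteq> W_gens X e"
    using w unfolding W_X_def by blast
  have "Phi d w = (\<Sum>x\<in>IX. scale (\<Sum>w'\<in>t. r w' * w' x) (d x))"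
    unfolding Phi_def using W_X_kI[OF w] tr(1) by simp
  also have "\<dots> = (\<Sum>x\<in>IX. \<Sum>w'\<in>t. scale (r w') (scale (w' x) (d x)))"
    by (simp add: v.scale_sum_left)
  also have "\<dots> = (\<Sum>w'\<in>t. \<Sum>x\<in>IX. scale (r w') (scale (w' x) (d x)))"
    by (rule sum.swap)
  also have "\<dots> = (\<Sum>w'\<in>t. scale (r w') (\<Sum>x\<in>IX. scale (w' x) (d x)))"
    by (simp add: v.scale_sum_right)
  also have "\<dots> = 0" using gen_zero[OF d] tr(3) by (simp add: subset_iff)
  finally show "Phi d w = 0" .
next
  fix g h and v :: "'m \<Rightarrow> 'k" assume g: "g \<in> G" and h: "h \<in> G" and v: "v \<in> kI e"
  define F where "F = (\<lambda>y. scale (v (ginv e g * y * ginv e h)) (d y))"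
  have "Phi d (gact e g h v) = (\<Sum>y\<in>IX. F y)"
    unfolding Phi_def F_def using gact_kI by (simp add: gact_def)
  also have "\<dots> = (\<Sum>x\<in>IX. F (g * x * h))"
    by (rule sum.reindex_bij_betw[symmetric]) (rule IX_bij[OF g h])
  also have "\<dots> = (\<Sum>x\<in>IX. lact g (ract (scale (v x) (d x)) h))"
  proof (rule sum.cong)
    fix x assume x: "x \<in> IX"
    show "F (g * x * h) = lact g (ract (scale (v x) (d x)) h)"
      unfolding F_def using cancel_GG[OF g h x] der_equiv[OF d g h x] r_sc[OF h] l_sc[OF g] by simp
  qed simp
  also have "\<dots> = lact g (\<Sum>x\<in>IX. ract (scale (v x) (d x)) h)"
    by (rule l_sum[OF g, symmetric])
  also have "\<dots> = lact g (ract (\<Sum>x\<in>IX. scale (v x) (d x)) h)"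
    by (simp only: r_sum[OF h])
  also have "\<dots> = lact g (ract (Phi d v) h)"
    unfolding Phi_def using v by simp
  finally show "Phi d (gact e g h v) = lact g (ract (Phi d v) h)" .
qed

end

context ctx
begin

abbreviation HV where "HV \<equiv> HomV scale X e lact ract"

lemma hv_out: "\<phi> \<in> HV \<Longrightarrow> v \<notin> kI e \<Longrightarrow> \<phi> v = 0"
  unfolding HomV_def by blast
lemma hv_add: "\<phi> \<in> HV \<Longrightarrow> u \<in> kI e \<Longrightarrow> v \<in> kI e \<Longrightarrow> \<phi> (\<lambda>y. u y + v y) = \<phi> u + \<phi> v"
  unfolding HomV_def by blast
lemma hv_sc: "\<phi> \<in> HV \<Longrightarrow> v \<in> kI e \<Longrightarrow> \<phi> (\<lambda>y. c * v y) = scale c (\<phi> v)"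
  unfolding HomV_def by blast
lemma hv_W: "\<phi> \<in> HV \<Longrightarrow> w \<in> W_X X e \<Longrightarrow> \<phi> w = 0"
  unfolding HomV_def by blast
lemma hv_eq: "\<phi> \<in> HV \<Longrightarrow> g \<in> G \<Longrightarrow> h \<in> G \<Longrightarrow> v \<in> kI e \<Longrightarrow> \<phi> (gact e g h v) = lact g (ract (\<phi> v) h)"
  unfolding HomV_def by blast

lemma zero_kI: "(\<lambda>y. 0 :: 'k) \<in> kI e" unfolding kI_iff by simp

lemma hv_zero: assumes p: "\<phi> \<in> HV" shows "\<phi> (\<lambda>y. 0) = 0"
  using hv_add[OF p zero_kI zero_kI] by simp

lemma hv_diff: assumes p: "\<phi> \<in> HV" and u: "u \<in> kI e" and v: "v \<in> kI e"
  shows "\<phi> (\<lambda>y. u y - v y) = \<phi> u - \<phi> v"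
proof -
  have mv: "(\<lambda>y. (-1) * v y) \<in> kI e" using v unfolding kI_iff by simp
  have "(\<lambda>y. u y - v y) = (\<lambda>y. u y + (\<lambda>y. (-1) * v y) y)" by simp
  then have "\<phi> (\<lambda>y. u y - v y) = \<phi> u + \<phi> (\<lambda>y. (-1) * v y)" using hv_add[OF p u mv] by simp
  also have "\<dots> = \<phi> u - \<phi> v" using hv_sc[OF p v, of "-1"] by simp
  finally show ?thesis .
qed

lemma hv_Wgen: assumes p: "\<phi> \<in> HV" and w: "w \<in> W_gens X e" shows "\<phi> w = 0"
proof -
  have "(\<lambda>y. \<Sum>w'\<in>{w}. (\<lambda>_. 1) w' * w' y) = w" by simp
  then have "w \<in> W_X X e" unfolding W_X_def using w
    by (intro CollectI exI[of _ "{w}"] exI[of _ "\<lambda>_. 1"]) auto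
  then show ?thesis using hv_W[OF p] by blast
qed

lemma hv_sim: assumes p: "\<phi> \<in> HV" and ab: "(a, b) \<in> simX X e" shows "\<phi> (delta a) = \<phi> (delta b)"
proof -
  have w: "(\<lambda>y. delta a y - delta b y) \<in> W_gens X e" unfolding W_gens_def using ab by blast
  have "\<phi> (\<lambda>y. delta a y - delta b y) = \<phi> (delta a) - \<phi> (delta b)"
    using hv_diff[OF p] delta_kI simX_sub[OF ab] by blast
  then show ?thesis using hv_Wgen[OF p w] by simp
qed

lemma hv_Z: assumes p: "\<phi> \<in> HV" and z: "z \<in> Zset X e" shows "\<phi> (delta z) = 0"
proof -
  have "delta z \<in> W_gens X e" unfolding W_gens_def using z by blast
  then show ?thesis using hv_Wgen[OF p] by blast
qed

lemma uncancel_GG: assumes g: "g \<in> G" and h: "h \<in> G" and y: "y \<in> IX"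
  shows "g * (ginv e g * y * ginv e h) * h = y"
proof -
  have "g * (ginv e g * y * ginv e h) * h = (g * ginv e g) * y * (ginv e h * h)" by (simp add: mult.assoc)
  also have "\<dots> = y" using ginv_r[OF g] ginv_l[OF h] IX_l[OF y] IX_r[OF y] by (simp add: mult.assoc)
  finally show ?thesis .
qed

lemma gact_delta: assumes g: "g \<in> G" and h: "h \<in> G" and x: "x \<in> IX"
  shows "gact e g h (delta x :: 'm \<Rightarrow> 'k) = delta (g * x * h)"
proof
  fix y
  show "gact e g h (delta x :: 'm \<Rightarrow> 'k) y = delta (g * x * h) y"
  proof (cases "y \<in> IX")
    case True
    have "ginv e g * y * ginv e h = x \<longleftrightarrow> y = g * x * h"
      using cancel_GG[OF g h x] uncancel_GG[OF g h True] by metis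
    then show ?thesis unfolding gact_def delta_def using True by simp
  next
    case False
    then have "y \<noteq> g * x * h" using IX_GG[OF g h x] by blast
    then show ?thesis unfolding gact_def delta_def using False by simp
  qed
qed

lemma hv_delta_l: assumes p: "\<phi> \<in> HV" and g: "g \<in> G" and x: "x \<in> IX"
  shows "\<phi> (delta (g * x)) = lact g (\<phi> (delta x))"
proof -
  have "\<phi> (gact e g e (delta x)) = lact g (ract (\<phi> (delta x)) e)"
    using hv_eq[OF p g eG delta_kI[OF x]] .
  moreover have "gact e g e (delta x :: 'm \<Rightarrow> 'k) = delta (g * x)"
    using gact_delta[OF g eG x] IX_r[OF x] by (simp add: mult.assoc)
  ultimately show ?thesis using r_unit by simp
qed

lemma hv_delta_r: assumes p: "\<phi> \<in> HV" and h: "h \<in> G" and x: "x \<in> IX"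
  shows "\<phi> (delta (x * h)) = ract (\<phi> (delta x)) h"
proof -
  have "\<phi> (gact e e h (delta x)) = lact e (ract (\<phi> (delta x)) h)"
    using hv_eq[OF p eG h delta_kI[OF x]] .
  moreover have "gact e e h (delta x :: 'm \<Rightarrow> 'k) = delta (x * h)"
    using gact_delta[OF eG h x] IX_l[OF x] by simp
  ultimately show ?thesis using l_unit by simp
qed

lemma hv_expand_S: assumes p: "\<phi> \<in> HV"
  shows "finite S \<Longrightarrow> S \<subseteq> IX \<Longrightarrow>
    \<phi> (\<lambda>y. \<Sum>x\<in>S. v x * delta x y) = (\<Sum>x\<in>S. scale (v x) (\<phi> (delta x)))"
proof (induction S rule: finite_induct)
  case empty then show ?case using hv_zero[OF p] by simp
next
  case (insert x S)
  have xI: "x \<in> IX" and SI: "S \<subseteq> IX" using insert by auto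
  have k1: "(\<lambda>y. \<Sum>x\<in>S. v x * delta x y) \<in> kI e"
    unfolding kI_iff
  proof (intro allI impI)
    fix y assume y: "y \<notin> IX"
    have "\<forall>x'\<in>S. v x' * delta x' y = 0" using SI y unfolding delta_def by auto
    then show "(\<Sum>x\<in>S. v x * delta x y) = 0" by (simp add: sum.neutral)
  qed
  have kx: "(\<lambda>y. v x * delta x y) \<in> kI e" using delta_kI[OF xI] unfolding kI_iff by simp
  have "\<phi> (\<lambda>y. \<Sum>x'\<in>insert x S. v x' * delta x' y) = \<phi> (\<lambda>y. v x * delta x y + (\<Sum>x\<in>S. v x * delta x y))"
    using insert by simp
  also have "\<dots> = \<phi> (\<lambda>y. v x * delta x y) + \<phi> (\<lambda>y. \<Sum>x\<in>S. v x * delta x y)"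
    using hv_add[OF p kx k1] by simp
  also have "\<dots> = scale (v x) (\<phi> (delta x)) + (\<Sum>x\<in>S. scale (v x) (\<phi> (delta x)))"
    using hv_sc[OF p delta_kI[OF xI]] insert SI by simp
  finally show ?case using insert by simp
qed

lemma hv_expand: assumes p: "\<phi> \<in> HV" and v: "v \<in> kI e"
  shows "\<phi> v = (\<Sum>x\<in>IX. scale (v x) (\<phi> (delta x)))"
proof -
  have "v = (\<lambda>y. \<Sum>x\<in>IX. v x * delta x y)"
  proof
    fix y
    have "(\<Sum>x\<in>IX. v x * delta x y) = (\<Sum>x\<in>IX. if y = x then v x else 0)"
      by (rule sum.cong) (auto simp: delta_def)
    also have "\<dots> = v y" using v unfolding kI_iff by simp
    finally show "v y = (\<Sum>x\<in>IX. v x * delta x y)" by simp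
  qed
  then have "\<phi> v = \<phi> (\<lambda>y. \<Sum>x\<in>IX. v x * delta x y)" by simp
  also have "\<dots> = (\<Sum>x\<in>IX. scale (v x) (\<phi> (delta x)))" using hv_expand_S[OF p finite_IX] by simp
  finally show ?thesis .
qed

end

context ctx
begin

definition mkd :: "('m \<Rightarrow> 'a) \<Rightarrow> (('m \<Rightarrow> 'k) \<Rightarrow> 'a) \<Rightarrow> 'm \<Rightarrow> 'a" where
  "mkd D \<phi> = (\<lambda>m. if e * m * e \<in> G then D (e * m * e) else \<phi> (delta (e * m * e)))"

lemma DerG_D: "D \<in> DerG \<Longrightarrow> g \<in> G \<Longrightarrow> h \<in> G \<Longrightarrow> D (g * h) = lact g (D h) + ract (D g) h"
  unfolding Der_G_def by blast
lemma DerG_out: "D \<in> DerG \<Longrightarrow> g \<notin> G \<Longrightarrow> D g = 0"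
  unfolding Der_G_def by blast

lemma ee_eme: "e * (e * m * e) * e = e * m * e"
  using idemD[OF e] idemD2[OF e] by (simp add: mult.assoc)

lemma key_pair:
  assumes p: "\<phi> \<in> HV" and nU: "\<not> (e * m * e \<in> G \<and> e * n * e \<in> G)"
  shows "\<phi> (delta (e * (m * n) * e)) = \<phi> (delta ((e * m * e) * (e * n * e)))"
proof -
  define x where "x = e * m * n * e"
  define y where "y = e * m * e * n * e"
  have x1: "e * (m * n) * e = x" unfolding x_def by (simp add: mult.assoc)
  have y1: "(e * m * e) * (e * n * e) = y" unfolding y_def using idemD2[OF e] by (simp add: mult.assoc)
  have xn: "e * (m * n) * e \<notin> G" using U_mult_iff nU by blast
  have xI: "x \<in> IX" using eme_IX[OF xn] x1 by simp
  have y2: "e * (m * e * n) * e = y" unfolding y_def by (simp add: mult.assoc)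
  have "e * (m * e * n) * e \<notin> G"
  proof
    assume "e * (m * e * n) * e \<in> G"
    then have "e * (m * e) * e \<in> G \<and> e * n * e \<in> G" using U_mult_iff by blast
    moreover have "e * (m * e) * e = e * m * e" using idemD[OF e] by (simp add: mult.assoc)
    ultimately show False using nU by simp
  qed
  then have yI: "y \<in> IX" using eme_IX y2 by metis
  have "\<not> X \<subseteq> sigma (m * n)" using sigU xn by blast
  then have "(x, y) \<in> gen_rel X e" unfolding gen_rel_def x_def y_def using xI yI x_def y_def by blast
  then have "(x, y) \<in> simX X e" unfolding simX_def by blast
  then show ?thesis using hv_sim[OF p] x1 y1 by simp
qed

lemma mkd_der: assumes D: "D \<in> DerG" and p: "\<phi> \<in> HV" shows "mkd D \<phi> \<in> DerM"
  unfolding Der_M_def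
proof (intro CollectI allI)
  fix m n
  let ?d = "mkd D \<phi>"
  define a where "a = e * m * e"
  define b where "b = e * n * e"
  have dn: "?d n = (if b \<in> G then D b else \<phi> (delta b))" unfolding mkd_def b_def by simp
  have dm: "?d m = (if a \<in> G then D a else \<phi> (delta a))" unfolding mkd_def a_def by simp
  show "?d (m * n) = rl m (?d n) + rr (?d m) n"
  proof (cases "a \<in> G \<and> b \<in> G")
    case True
    have u: "e * (m * n) * e \<in> G" using True U_mult_iff unfolding a_def b_def by blast
    have eq: "e * (m * n) * e = a * b" using True U_mult_eq unfolding a_def b_def by blast
    have "?d (m * n) = D (a * b)" unfolding mkd_def using u eq by simp
    also have "\<dots> = lact a (D b) + ract (D a) b" using DerG_D[OF D] True by blast
    also have "\<dots> = rl m (?d n) + rr (?d m) n" unfolding rl_eq rr_eq using True dn dm a_def b_def by simp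
    finally show ?thesis .
  next
    case False
    have xn: "e * (m * n) * e \<notin> G" using U_mult_iff False unfolding a_def b_def by blast
    have kp: "\<phi> (delta (e * (m * n) * e)) = \<phi> (delta (a * b))"
      using key_pair[OF p] False unfolding a_def b_def by blast
    have d1: "?d (m * n) = \<phi> (delta (a * b))" unfolding mkd_def using xn kp by simp
    show ?thesis
    proof (cases "a \<in> G")
      case aG: True
      then have bI: "b \<in> IX" using False eme_IX unfolding b_def by blast
      have "\<phi> (delta (a * b)) = lact a (\<phi> (delta b))" using hv_delta_l[OF p aG bI] .
      then show ?thesis unfolding rl_eq rr_eq using d1 aG False dn a_def b_def by simp
    next
      case aN: False
      then have aI: "a \<in> IX" using eme_IX unfolding a_def by blast
      show ?thesis
      proof (cases "b \<in> G")
        case bG: True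
        have "\<phi> (delta (a * b)) = ract (\<phi> (delta a)) b" using hv_delta_r[OF p bG aI] .
        then show ?thesis unfolding rl_eq rr_eq using d1 aN bG dm a_def b_def by simp
      next
        case bN: False
        then have bI: "b \<in> IX" using eme_IX unfolding b_def by blast
        have "\<phi> (delta (a * b)) = 0" using hv_Z[OF p IX_Zset[OF aI bI]] .
        then show ?thesis unfolding rl_eq rr_eq using d1 aN bN a_def b_def by simp
      qed
    qed
  qed
qed

lemma resG_mkd: assumes D: "D \<in> DerG" shows "resG (mkd D \<phi>) = D"
proof
  fix g show "resG (mkd D \<phi>) g = D g"
  proof (cases "g \<in> G")
    case True
    then have "e * g * e = g" using G_l G_r by simp
    then show ?thesis unfolding resG_def mkd_def using True by simp
  next
    case False then show ?thesis unfolding resG_def using DerG_out[OF D] by simp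
  qed
qed

lemma Phi_mkd: assumes p: "\<phi> \<in> HV" shows "Phi (mkd D \<phi>) = \<phi>"
proof
  fix v show "Phi (mkd D \<phi>) v = \<phi> v"
  proof (cases "v \<in> kI e")
    case True
    have "(\<Sum>x\<in>IX. scale (v x) (mkd D \<phi> x)) = (\<Sum>x\<in>IX. scale (v x) (\<phi> (delta x)))"
    proof (rule sum.cong)
      fix x assume x: "x \<in> IX"
      then show "scale (v x) (mkd D \<phi> x) = scale (v x) (\<phi> (delta x))"
        unfolding mkd_def using IX_eq[OF x] IX_notU[OF x] by simp
    qed simp
    then show ?thesis unfolding Phi_def using True hv_expand[OF p True] by simp
  next
    case False then show ?thesis unfolding Phi_def using hv_out[OF p] by simp
  qed
qed

lemma resG_der: assumes d: "d \<in> DerM" shows "resG d \<in> DerG"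
  unfolding Der_G_def
proof (intro CollectI conjI allI impI ballI)
  fix g assume "g \<notin> G" then show "resG d g = 0" unfolding resG_def by simp
next
  fix g h assume g: "g \<in> G" and h: "h \<in> G"
  have gh: "g * h \<in> G" using units_mult[OF e g h] .
  have ege: "e * g * e = g" "e * h * e = h" using G_l G_r g h by auto
  show "resG d (g * h) = lact g (resG d h) + ract (resG d g) h"
    unfolding resG_def using g h gh derD[OF d, of g h] ege unfolding rl_eq rr_eq by simp
qed

lemma kernel:
  assumes d: "d \<in> DerM" and d': "d' \<in> DerM"
  shows "(\<lambda>x. d x - d' x) \<in> InnM \<longleftrightarrow> (\<lambda>x. resG d x - resG d' x) \<in> InnG \<and> Phi d = Phi d'"
proof
  assume "(\<lambda>x. d x - d' x) \<in> InnM"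
  then obtain a where a: "(\<lambda>x. d x - d' x) = (\<lambda>m. rl m a - rr a m)" unfolding Inn_M_def by blast
  then have a': "d m - d' m = rl m a - rr a m" for m by metis
  have "(\<lambda>x. resG d x - resG d' x) = (\<lambda>g. if g \<in> G then lact g a - ract a g else 0)"
  proof
    fix g show "resG d g - resG d' g = (if g \<in> G then lact g a - ract a g else 0)"
    proof (cases "g \<in> G")
      case True
      then have "e * g * e = g" using G_l G_r by simp
      then show ?thesis unfolding resG_def using True a'[of g] unfolding rl_eq rr_eq by simp
    qed (simp add: resG_def)
  qed
  then have 1: "(\<lambda>x. resG d x - resG d' x) \<in> InnG" unfolding Inn_G_def by blast
  have "d x = d' x" if x: "x \<in> IX" for x
    using a'[of x] IX_notU[OF x] IX_eq[OF x] unfolding rl_eq rr_eq by simp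
  then have "Phi d = Phi d'" unfolding Phi_def by (intro ext) (simp cong: sum.cong)
  then show "(\<lambda>x. resG d x - resG d' x) \<in> InnG \<and> Phi d = Phi d'" using 1 by blast
next
  assume "(\<lambda>x. resG d x - resG d' x) \<in> InnG \<and> Phi d = Phi d'"
  then obtain a where a: "(\<lambda>x. resG d x - resG d' x) = (\<lambda>g. if g \<in> G then lact g a - ract a g else 0)"
    and P: "Phi d = Phi d'" unfolding Inn_G_def by blast
  have a': "resG d g - resG d' g = (if g \<in> G then lact g a - ract a g else 0)" for g
    using a by metis
  have dI: "d x = d' x" if x: "x \<in> IX" for x
    using P Phi_delta[OF x, of d] Phi_delta[OF x, of d'] by simp
  have "(\<lambda>x. d x - d' x) = (\<lambda>m. rl m a - rr a m)"
  proof
    fix m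
    have "d m - d' m = d (e * m * e) - d' (e * m * e)" using der_eme[OF d] der_eme[OF d'] by simp
    also have "\<dots> = rl m a - rr a m"
    proof (cases "e * m * e \<in> G")
      case True
      then show ?thesis using a'[of "e * m * e"] unfolding resG_def rl_eq rr_eq by simp
    next
      case False
      then show ?thesis using dI[OF eme_IX[OF False]] unfolding rl_eq rr_eq by simp
    qed
    finally show "d m - d' m = rl m a - rr a m" .
  qed
  then show "(\<lambda>x. d x - d' x) \<in> InnM" unfolding Inn_M_def by blast
qed

lemma resG_add: "resG (fadd d d') = fadd (resG d) (resG d')"
  unfolding resG_def fadd_def by auto
lemma resG_sc: "resG (fscale scale c d) = fscale scale c (resG d)"
  unfolding resG_def fscale_def by auto
lemma resG_diff: "resG (\<lambda>x. d x - d' x) = (\<lambda>x. resG d x - resG d' x)"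
  unfolding resG_def by auto

lemma Phi_add: "Phi (fadd d d') = fadd (Phi d) (Phi d')"
  unfolding Phi_def fadd_def by (auto simp: v.scale_right_distrib sum.distrib)
lemma Phi_sc: "Phi (fscale scale c d) = fscale scale c (Phi d)"
  unfolding Phi_def fscale_def by (intro ext) (simp add: v.scale_sum_right mult.commute)

lemma zero_DerG: "(\<lambda>_. 0) \<in> DerG"
  unfolding Der_G_def using l_zero r_zero by auto

end

context ctx
begin

lemma ginv_mult: assumes g: "g \<in> G" and h: "h \<in> G"
  shows "ginv e (g * h) = ginv e h * ginv e g"
proof -
  define k where "k = ginv e h * ginv e g"
  have gh: "g * h \<in> G" using units_mult[OF e g h] .
  have kG: "k \<in> G" unfolding k_def using units_mult[OF e ginvG[OF h] ginvG[OF g]] .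
  have kgh: "k * (g * h) = e"
  proof -
    have "k * (g * h) = ginv e h * (ginv e g * g) * h" unfolding k_def by (simp add: mult.assoc)
    also have "\<dots> = e" using ginv_l[OF g] ginv_l[OF h] G_r[OF ginvG[OF h]] by simp
    finally show ?thesis .
  qed
  have "ginv e (g * h) = e * ginv e (g * h)" using G_l[OF ginvG[OF gh]] by simp
  also have "\<dots> = (k * (g * h)) * ginv e (g * h)" using kgh by simp
  also have "\<dots> = k * ((g * h) * ginv e (g * h))" by (simp only: mult.assoc)
  also have "\<dots> = k" using ginv_r[OF gh] G_r[OF kG] by simp
  finally show ?thesis unfolding k_def .
qed

lemma G_bij: assumes g: "g \<in> G" shows "bij_betw (\<lambda>h. g * h) G G"
proof (rule bij_betw_byWitness[where f' = "\<lambda>k. ginv e g * k"])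
  show "\<forall>a\<in>G. ginv e g * (g * a) = a" using ginv_l[OF g] G_l by (simp add: mult.assoc[symmetric])
  show "\<forall>a'\<in>G. g * (ginv e g * a') = a'" using ginv_r[OF g] G_l by (simp add: mult.assoc[symmetric])
  show "(\<lambda>h. g * h) ` G \<subseteq> G" using units_mult[OF e g] by blast
  show "(\<lambda>k. ginv e g * k) ` G \<subseteq> G" using units_mult[OF e ginvG[OF g]] by blast
qed

lemma H1G_zero: assumes n: "of_nat (card G) \<noteq> (0::'k)" and D: "D \<in> DerG" shows "D \<in> InnG"
proof -
  define N where "N = (of_nat (card G) :: 'k)"
  define c where "c = (\<Sum>h\<in>G. ract (D h) (ginv e h))"
  define a where "a = scale (- inverse N) c"
  have key: "scale N (D g) = ract c g - lact g c" if g: "g \<in> G" for g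
  proof -
    have gi: "ginv e g \<in> G" using ginvG[OF g] .
    have step: "ract (D (g * h)) (ginv e (g * h)) =
        lact g (ract (ract (D h) (ginv e h)) (ginv e g)) + ract (D g) (ginv e g)" if h: "h \<in> G" for h
    proof -
      have hi: "ginv e h \<in> G" using ginvG[OF h] .
      have hg: "ginv e h * ginv e g \<in> G" using units_mult[OF e hi gi] .
      have "ract (D (g * h)) (ginv e (g * h)) = ract (lact g (D h) + ract (D g) h) (ginv e h * ginv e g)"
        using DerG_D[OF D g h] ginv_mult[OF g h] by simp
      also have "\<dots> = ract (lact g (D h)) (ginv e h * ginv e g) + ract (ract (D g) h) (ginv e h * ginv e g)"
        using r_add[OF hg] .
      also have "ract (lact g (D h)) (ginv e h * ginv e g) = ract (ract (lact g (D h)) (ginv e h)) (ginv e g)"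
        using r_comp[OF hi gi] by simp
      also have "\<dots> = lact g (ract (ract (D h) (ginv e h)) (ginv e g))"
        using lr_comm[OF g hi] lr_comm[OF g gi] by simp
      also have "ract (ract (D g) h) (ginv e h * ginv e g) = ract (D g) (h * (ginv e h * ginv e g))"
        using r_comp[OF h hg] .
      also have "h * (ginv e h * ginv e g) = ginv e g"
        using ginv_r[OF h] G_l[OF gi] by (simp add: mult.assoc[symmetric])
      finally show ?thesis .
    qed
    have "c = (\<Sum>h\<in>G. ract (D (g * h)) (ginv e (g * h)))"
      unfolding c_def using sum.reindex_bij_betw[OF G_bij[OF g], of "\<lambda>k. ract (D k) (ginv e k)"] by simp
    also have "\<dots> = (\<Sum>h\<in>G. lact g (ract (ract (D h) (ginv e h)) (ginv e g)) + ract (D g) (ginv e g))"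
      using step by (rule sum.cong[OF refl])
    also have "\<dots> = (\<Sum>h\<in>G. lact g (ract (ract (D h) (ginv e h)) (ginv e g))) + (\<Sum>h\<in>G. ract (D g) (ginv e g))"
      by (rule sum.distrib)
    also have "(\<Sum>h\<in>G. lact g (ract (ract (D h) (ginv e h)) (ginv e g))) = lact g (\<Sum>h\<in>G. ract (ract (D h) (ginv e h)) (ginv e g))"
      by (rule l_sum[OF g, symmetric])
    also have "(\<Sum>h\<in>G. ract (ract (D h) (ginv e h)) (ginv e g)) = ract c (ginv e g)"
      unfolding c_def by (rule r_sum[OF gi, symmetric])
    also have "(\<Sum>h\<in>G. ract (D g) (ginv e g)) = scale N (ract (D g) (ginv e g))"
      unfolding N_def by (rule v.sum_constant_scale)
    finally have c_eq: "c = lact g (ract c (ginv e g)) + scale N (ract (D g) (ginv e g))" .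
    have "ract c g = ract (lact g (ract c (ginv e g))) g + ract (scale N (ract (D g) (ginv e g))) g"
      using c_eq r_add[OF g] by metis
    also have "ract (lact g (ract c (ginv e g))) g = lact g (ract (ract c (ginv e g)) g)"
      using lr_comm[OF g g] by simp
    also have "ract (ract c (ginv e g)) g = c" using r_comp[OF gi g] ginv_l[OF g] r_unit by simp
    also have "ract (scale N (ract (D g) (ginv e g))) g = scale N (D g)"
      using r_sc[OF g] r_comp[OF gi g] ginv_l[OF g] r_unit by simp
    finally show ?thesis by simp
  qed
  have "D = (\<lambda>g. if g \<in> G then lact g a - ract a g else 0)"
  proof
    fix g show "D g = (if g \<in> G then lact g a - ract a g else 0)"
    proof (cases "g \<in> G")
      case True
      have "lact g a - ract a g = scale (inverse N) (ract c g - lact g c)"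
        unfolding a_def using l_sc[OF True] r_sc[OF True] l_minus[OF True] r_minus[OF True]
        by (simp add: v.scale_right_diff_distrib algebra_simps)
      also have "\<dots> = scale (inverse N) (scale N (D g))" using key[OF True] by simp
      also have "\<dots> = D g" using n unfolding N_def by simp
      finally show ?thesis using True by simp
    next
      case False then show ?thesis using DerG_out[OF D] by simp
    qed
  qed
  then show ?thesis unfolding Inn_G_def by blast
qed

lemma part1: "lin_iso (H1_M scale X e lact ract)
           (prod_space (H1_G scale G lact ract) (HomV_space scale X e lact ract))"
proof -
  have tgt: "prod_space (H1_G scale G lact ract) (HomV_space scale X e lact ract) =
    (coset fadd InnG ` DerG \<times> HV,
     \<lambda>x y. ({fadd u v | u v. u \<in> fst x \<and> v \<in> fst y}, fadd (snd x) (snd y)),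
     \<lambda>c x. ({fadd (fscale scale c u) i | u i. u \<in> fst x \<and> i \<in> InnG}, fscale scale c (snd x)))"
    unfolding prod_space_def H1_G_def quot_space_eq HomV_space_def by simp
  define L where "L = (\<lambda>d. (coset fadd InnG (resG d), Phi d))"
  show ?thesis unfolding H1_M_def tgt
  proof (rule quot_iso[OF vs InnM_subsp, where L = L])
    show "InnM \<subseteq> DerM" by (rule InnM_sub)
  next
    fix u v assume "u \<in> DerM" "v \<in> DerM" then show "fadd u v \<in> DerM" by (rule DerM_add)
  next
    fix c u assume "u \<in> DerM" then show "fscale scale c u \<in> DerM" by (rule DerM_sc)
  next
    show "L ` DerM = coset fadd InnG ` DerG \<times> HV"
    proof
      show "L ` DerM \<subseteq> coset fadd InnG ` DerG \<times> HV"
        unfolding L_def using resG_der Phi_HomV by blast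
    next
      show "coset fadd InnG ` DerG \<times> HV \<subseteq> L ` DerM"
      proof
        fix z assume "z \<in> coset fadd InnG ` DerG \<times> HV"
        then obtain D \<phi> where z: "z = (coset fadd InnG D, \<phi>)" "D \<in> DerG" "\<phi> \<in> HV" by blast
        have "L (mkd D \<phi>) = z" unfolding L_def using z resG_mkd Phi_mkd by simp
        then show "z \<in> L ` DerM" using mkd_der[OF z(2,3)] by blast
      qed
    qed
  next
    fix u v assume "u \<in> DerM" "v \<in> DerM"
    show "L (fadd u v) = (\<lambda>x y. ({fadd u v | u v. u \<in> fst x \<and> v \<in> fst y}, fadd (snd x) (snd y))) (L u) (L v)"
      unfolding L_def using qadd_coset[OF vs InnG_subsp] resG_add Phi_add by simp
  next
    fix c u assume "u \<in> DerM"
    show "L (fscale scale c u) = (\<lambda>c x. ({fadd (fscale scale c u) i | u i. u \<in> fst x \<and> i \<in> InnG}, fscale scale c (snd x))) c (L u)"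
      unfolding L_def using qscale_coset[OF vs InnG_subsp] resG_sc Phi_sc by simp
  next
    fix u v assume u: "u \<in> DerM" and v: "v \<in> DerM"
    show "L u = L v \<longleftrightarrow> (\<lambda>x. u x - v x) \<in> InnM"
      unfolding L_def using kernel[OF u v] coset_eq[OF vs InnG_subsp] by simp
  qed
qed

lemma part2: assumes n: "of_nat (card G) \<noteq> (0::'k)"
  shows "lin_iso (H1_M scale X e lact ract) (HomV_space scale X e lact ract)"
  unfolding H1_M_def HomV_space_def
proof (rule quot_iso[OF vs InnM_subsp, where L = Phi])
  show "InnM \<subseteq> DerM" by (rule InnM_sub)
next
  fix u v assume "u \<in> DerM" "v \<in> DerM" then show "fadd u v \<in> DerM" by (rule DerM_add)
next
  fix c u assume "u \<in> DerM" then show "fscale scale c u \<in> DerM" by (rule DerM_sc)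
next
  show "Phi ` DerM = HV"
  proof
    show "Phi ` DerM \<subseteq> HV" using Phi_HomV by blast
  next
    show "HV \<subseteq> Phi ` DerM"
    proof
      fix \<phi> assume p: "\<phi> \<in> HV"
      have "Phi (mkd (\<lambda>_. 0) \<phi>) = \<phi>" using Phi_mkd[OF p] .
      then show "\<phi> \<in> Phi ` DerM" using mkd_der[OF zero_DerG p] by (metis image_eqI)
    qed
  qed
next
  fix u v assume "u \<in> DerM" "v \<in> DerM" then show "Phi (fadd u v) = fadd (Phi u) (Phi v)" by (simp add: Phi_add)
next
  fix c u assume "u \<in> DerM" then show "Phi (fscale scale c u) = fscale scale c (Phi u)" by (simp add: Phi_sc)
next
  fix u v assume u: "u \<in> DerM" and v: "v \<in> DerM"
  have "resG (\<lambda>x. u x - v x) \<in> DerG" using resG_der[OF DerM_diff[OF u v]] .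
  then have "(\<lambda>x. resG u x - resG v x) \<in> InnG" using H1G_zero[OF n] resG_diff by metis
  then show "Phi u = Phi v \<longleftrightarrow> (\<lambda>x. u x - v x) \<in> InnM" using kernel[OF u v] by blast
qed

end

theorem mainTheorem15:
  fixes scale :: "'k::field \<Rightarrow> 'a::ab_group_add \<Rightarrow> 'a"
    and lact :: "'m::{monoid_mult, finite} \<Rightarrow> 'a \<Rightarrow> 'a"
    and ract :: "'a \<Rightarrow> 'm \<Rightarrow> 'a"
    and X :: "'m set" and eX :: 'm
  assumes "rectangular TYPE('m)"
    and "splits_max_subgroups TYPE('k) TYPE('m)"
    and "X \<in> Lambda TYPE('m)"
    and "idem eX" and "ideal eX = X"
    and "GGop_module scale lact ract (units_at eX) eX"
  shows "lin_iso (H1_M scale X eX lact ract)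
           (prod_space (H1_G scale (units_at eX) lact ract) (HomV_space scale X eX lact ract))
       \<and> (of_nat (card (units_at eX)) \<noteq> (0::'k) \<longrightarrow>
           lin_iso (H1_M scale X eX lact ract) (HomV_space scale X eX lact ract))"
proof -
  interpret c: ctx scale lact ract X eX
    using assms(1,4,5,6) by unfold_locales
  show ?thesis using c.part1 c.part2 by blast
qed

end
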